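(* Let $Q$ be the rate matrix of an irreducible BD process on $\mathcal{M}=\{0,1\}^k$ ($k\ge1$) that is reversible with respect to its limiting distribution $\pi$, with $\pi(m)>0$ for all $m$. For $\varepsilon>0$ with $\varepsilon\, q_i(m)<1$ for all $i,m$, let $(M^{(s)}_\varepsilon)_{s\ge 0}$ be the homogeneous discrete-time Markov chain with transition matrix $P_\varepsilon$ defined below. Then: (i) $(M^{(s)}_\varepsilon)$ is irreducible and aperiodic, so it has a unique stationary distribution $\pi_\varepsilon$, which is also its limiting distribution. (ii) For any vector norm $\|\cdot\|$ on $\mathbb{R}^{l}$, $\|\pi_\varepsilon-\pi\|=\mathcal{O}(\varepsilon)$ as $\varepsilon\to0$. (iii) For each $m\in\mathcal{M}$, let $W^\varepsilon_m$ be the number of iterations the chain started at $m$ takes to leave $m$ (so $\Pr(W^\varepsilon_m> n)=P_\varepsilon(m,m)^n$ for integers $n\ge0$). Then $\varepsilon W^\varepsilon_m$ converges in distribution as $\varepsilon\to0$ to an exponential random variable with rate $\lambda(m):=\sum_{i=1}^k q_i(m)$, i.e. the holding-time distribution of the BD process in state $m$. (iv) For $m\neq m'$, let $\widetilde P_\varepsilon(m,m')=P_\varepsilon(m,m')/(1-P_\varepsilon(m,m))$ be the probability that the chain moves to $m'$ given that it leaves $m$. Then $\lim_{\varepsilon\to0}\widetilde P_\varepsilon(m,m')=q_i(m)/\lambda(m)$ if $m'=m^i$ for some $i\in\{1,\dots,k\}$, and $\lim_{\varepsilon\to0}\widetilde P_\varepsilon(m,m')=0$ otherwise; these are the jump-chain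 transition probabilities of the BD process.
   Context: $\mathcal{M}=\{0,1\}^k$, $l=2^k$; for $m\in\mathcal{M}$, $m^i$ is $m$ with coordinate $i$ flipped. The BD process is the continuous-time Markov chain with rate matrix $Q(m,m^i)=q_i(m)\ge0$, $Q(m,m)=-\sum_{i=1}^k q_i(m)$, $Q(m,m')=0$ otherwise. Reversibility: $\pi(m)Q(m,m')=\pi(m')Q(m',m)$ for all $m,m'$. For models $m,m'$, $H_{m,m'}$ is the set of coordinates where they differ, and $$P_\varepsilon(m,m')=\prod_{i\in H_{m,m'}} \varepsilon\, q_i(m)\prod_{i\notin H_{m,m'}}\bigl(1-\varepsilon\, q_i(m)\bigr),$$ i.e. from state $m$ each coordinate $i$ is flipped independently with probability $\varepsilon q_i(m)$. Distributions on $\mathcal{M}$ are viewed as row vectors in $\mathbb{R}^l$. *)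

theory Defs
  imports "HOL-Probability.Probability" "HOL-Library.Landau_Symbols"
begin

text \<open>Coordinates are a finite type 'k (so k = CARD('k) >= 1); models are
  functions 'k => bool, i.e. elements of {0,1}^k.\<close>

definition flip :: "('k \<Rightarrow> bool) \<Rightarrow> 'k \<Rightarrow> ('k \<Rightarrow> bool)" where
  "flip m i = m(i := \<not> m i)"

definition bd_rate :: "('k::finite \<Rightarrow> ('k \<Rightarrow> bool) \<Rightarrow> real) \<Rightarrow> ('k \<Rightarrow> bool) \<Rightarrow> ('k \<Rightarrow> bool) \<Rightarrow> real" where
  "bd_rate q m m' =
     (if m' = m then - (\<Sum>i\<in>UNIV. q i m) else (\<Sum>i\<in>{i. m' = flip m i}. q i m))"

definition total_rate :: "('k::finite \<Rightarrow> ('k \<Rightarrow> bool) \<Rightarrow> real) \<Rightarrow> ('k \<Rightarrow> bool) \<Rightarrow> real" where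
  "total_rate q m = (\<Sum>i\<in>UNIV. q i m)"

definition ctmc_irreducible :: "('s \<Rightarrow> 's \<Rightarrow> real) \<Rightarrow> bool" where
  "ctmc_irreducible Q \<longleftrightarrow> (\<forall>m m'. (m, m') \<in> {(a, b). a \<noteq> b \<and> Q a b > 0}\<^sup>*)"

definition reversible :: "('s \<Rightarrow> 's \<Rightarrow> real) \<Rightarrow> ('s \<Rightarrow> real) \<Rightarrow> bool" where
  "reversible Q p \<longleftrightarrow> (\<forall>m m'. p m * Q m m' = p m' * Q m' m)"

definition P_eps :: "('k::finite \<Rightarrow> ('k \<Rightarrow> bool) \<Rightarrow> real) \<Rightarrow> real \<Rightarrow> ('k \<Rightarrow> bool) \<Rightarrow> ('k \<Rightarrow> bool) \<Rightarrow> real" where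
  "P_eps q \<epsilon> m m' =
     (\<Prod>i\<in>{i. m i \<noteq> m' i}. \<epsilon> * q i m) * (\<Prod>i\<in>{i. m i = m' i}. 1 - \<epsilon> * q i m)"

fun mat_pow :: "('s::finite \<Rightarrow> 's \<Rightarrow> real) \<Rightarrow> nat \<Rightarrow> 's \<Rightarrow> 's \<Rightarrow> real" where
  "mat_pow P 0 m m' = (if m = m' then 1 else 0)"
| "mat_pow P (Suc n) m m' = (\<Sum>x\<in>UNIV. mat_pow P n m x * P x m')"

definition dtmc_irreducible :: "('s::finite \<Rightarrow> 's \<Rightarrow> real) \<Rightarrow> bool" where
  "dtmc_irreducible P \<longleftrightarrow> (\<forall>m m'. \<exists>n. mat_pow P n m m' > 0)"

definition dtmc_aperiodic :: "('s::finite \<Rightarrow> 's \<Rightarrow> real) \<Rightarrow> bool" where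
  "dtmc_aperiodic P \<longleftrightarrow> (\<forall>m. Gcd {n. n > 0 \<and> mat_pow P n m m > 0} = (1::nat))"

definition stationary :: "('s::finite \<Rightarrow> 's \<Rightarrow> real) \<Rightarrow> ('s \<Rightarrow> real) \<Rightarrow> bool" where
  "stationary P p \<longleftrightarrow> (\<forall>m. p m \<ge> 0) \<and> (\<Sum>m\<in>UNIV. p m) = 1
      \<and> (\<forall>m'. (\<Sum>m\<in>UNIV. p m * P m m') = p m')"

definition stat_dist :: "('s::finite \<Rightarrow> 's \<Rightarrow> real) \<Rightarrow> ('s \<Rightarrow> real)" where
  "stat_dist P = (THE p. stationary P p)"

definition limiting :: "('s::finite \<Rightarrow> 's \<Rightarrow> real) \<Rightarrow> ('s \<Rightarrow> real) \<Rightarrow> bool" where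
  "limiting P p \<longleftrightarrow> (\<forall>m m'. (\<lambda>n. mat_pow P n m m') \<longlonglongrightarrow> p m')"

definition is_vnorm :: "(('s \<Rightarrow> real) \<Rightarrow> real) \<Rightarrow> bool" where
  "is_vnorm N \<longleftrightarrow> (\<forall>x. N x \<ge> 0) \<and> (\<forall>x. N x = 0 \<longleftrightarrow> x = (\<lambda>_. 0))
     \<and> (\<forall>c x. N (\<lambda>m. c * x m) = \<bar>c\<bar> * N x) \<and> (\<forall>x y. N (\<lambda>m. x m + y m) \<le> N x + N y)"

text \<open>Convergence in distribution along a filter (CDF convergence at continuity points),
  the filter version of weak_conv_m.\<close>
definition weak_conv_filter :: "('a \<Rightarrow> real measure) \<Rightarrow> real measure \<Rightarrow> 'a filter \<Rightarrow> bool" where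
  "weak_conv_filter Mf M F \<longleftrightarrow>
     (\<forall>x. isCont (cdf M) x \<longrightarrow> ((\<lambda>e. cdf (Mf e) x) \<longlongrightarrow> cdf M x) F)"

text \<open>Law of W: number of iterations to leave m; W = 1 + Geometric(1 - P(m,m)),
  so Pr(W > n) = P(m,m)^n. Law of eps * W as a Borel measure on the reals.\<close>
definition scaled_holding_law :: "('k::finite \<Rightarrow> ('k \<Rightarrow> bool) \<Rightarrow> real) \<Rightarrow> real \<Rightarrow> ('k \<Rightarrow> bool) \<Rightarrow> real measure" where
  "scaled_holding_law q \<epsilon> m =
     distr (measure_pmf (geometric_pmf (1 - P_eps q \<epsilon> m m))) borel (\<lambda>n. \<epsilon> * real (Suc n))"

definition jump_prob :: "('k::finite \<Rightarrow> ('k \<Rightarrow> bool) \<Rightarrow> real) \<Rightarrow> real \<Rightarrow> ('k \<Rightarrow> bool) \<Rightarrow> ('k \<Rightarrow> bool) \<Rightarrow> real" where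
  "jump_prob q \<epsilon> m m' = P_eps q \<epsilon> m m' / (1 - P_eps q \<epsilon> m m)"

end

theory Submission
  imports Defs
begin

lemma mat_pow_nonneg: assumes "\<And>a b. P a b \<ge> 0" shows "mat_pow P n m m' \<ge> 0"
  by (induction n arbitrary: m') (auto intro!: sum_nonneg mult_nonneg_nonneg simp: assms)

lemma mat_pow_rowsum:
  assumes "\<And>a. (\<Sum>b\<in>UNIV. P a b) = 1" shows "(\<Sum>m'\<in>UNIV. mat_pow P n m m') = 1"
proof (induction n)
  case 0 thus ?case by simp
next
  case (Suc n)
  have "(\<Sum>m'\<in>UNIV. mat_pow P (Suc n) m m') = (\<Sum>x\<in>UNIV. mat_pow P n m x * (\<Sum>m'\<in>UNIV. P x m'))"
    by (simp add: sum_distrib_left) (rule sum.swap)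
  then show ?case using Suc by (simp add: assms)
qed

lemma mat_pow_add: "mat_pow P (a + b) m m' = (\<Sum>x\<in>UNIV. mat_pow P a m x * mat_pow P b x m')"
proof (induction b arbitrary: m')
  case 0 show ?case by (simp add: if_distrib cong: if_cong)
next
  case (Suc b)
  have "mat_pow P (a + Suc b) m m' = (\<Sum>y\<in>UNIV. mat_pow P (a+b) m y * P y m')" by simp
  also have "\<dots> = (\<Sum>y\<in>UNIV. \<Sum>x\<in>UNIV. mat_pow P a m x * mat_pow P b x y * P y m')"
    by (simp add: Suc sum_distrib_right)
  also have "\<dots> = (\<Sum>x\<in>UNIV. mat_pow P a m x * (\<Sum>y\<in>UNIV. mat_pow P b x y * P y m'))"
    by (subst sum.swap) (simp add: sum_distrib_left mult.assoc)
  finally show ?case by simp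
qed

lemma mat_pow_le1:
  assumes "\<And>a b. P a b \<ge> 0" "\<And>a. (\<Sum>b\<in>UNIV. P a b) = 1" shows "mat_pow P n m m' \<le> 1"
proof -
  have "mat_pow P n m m' \<le> (\<Sum>b\<in>UNIV. mat_pow P n m b)"
    by (rule member_le_sum) (auto intro: mat_pow_nonneg assms)
  thus ?thesis using mat_pow_rowsum[OF assms(2)] by simp
qed

lemma contract:
  fixes a b f :: "'s::finite \<Rightarrow> real"
  assumes ad: "\<And>x. a x \<ge> d" and bd: "\<And>x. b x \<ge> d" and sa: "sum a UNIV = 1" and sb: "sum b UNIV = 1"
    and fD: "\<And>x y. \<bar>f x - f y\<bar> \<le> D"
  shows "\<bar>(\<Sum>x\<in>UNIV. a x * f x) - (\<Sum>x\<in>UNIV. b x * f x)\<bar> \<le> (1 - real CARD('s) * d) * D"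
proof -
  define s where "s = 1 - real CARD('s) * d"
  define a' where "a' x = a x - d" for x
  define b' where "b' x = b x - d" for x
  have a'0: "a' x \<ge> 0" "b' x \<ge> 0" for x using ad bd by (auto simp: a'_def b'_def)
  have sa': "sum a' UNIV = s" using sa by (simp add: a'_def s_def sum_subtractf)
  have sb': "sum b' UNIV = s" using sb by (simp add: b'_def s_def sum_subtractf)
  have D0: "D \<ge> 0" using fD[of undefined undefined] by simp
  have e1: "(\<Sum>x\<in>UNIV. a x * f x) - (\<Sum>x\<in>UNIV. b x * f x) = (\<Sum>x\<in>UNIV. a' x * f x) - (\<Sum>y\<in>UNIV. b' y * f y)"
    by (simp add: a'_def b'_def left_diff_distrib sum_subtractf)
  have key: "s * ((\<Sum>x\<in>UNIV. a' x * f x) - (\<Sum>y\<in>UNIV. b' y * f y)) = (\<Sum>x\<in>UNIV. \<Sum>y\<in>UNIV. a' x * b' y * (f x - f y))"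
  proof -
    have 1: "(\<Sum>x\<in>UNIV. \<Sum>y\<in>UNIV. a' x * b' y * f x) = (\<Sum>x\<in>UNIV. a' x * f x * (\<Sum>y\<in>UNIV. b' y))"
      by (simp add: sum_distrib_left mult_ac)
    also have "\<dots> = (\<Sum>x\<in>UNIV. a' x * f x) * s" by (simp add: sb' sum_distrib_right)
    finally have 1: "(\<Sum>x\<in>UNIV. \<Sum>y\<in>UNIV. a' x * b' y * f x) = s * (\<Sum>x\<in>UNIV. a' x * f x)" by simp
    have 2: "(\<Sum>x\<in>UNIV. \<Sum>y\<in>UNIV. a' x * b' y * f y) = (\<Sum>y\<in>UNIV. b' y * f y * (\<Sum>x\<in>UNIV. a' x))"
      by (subst sum.swap) (simp add: sum_distrib_left mult_ac)
    also have "\<dots> = (\<Sum>y\<in>UNIV. b' y * f y) * s" by (simp add: sa' sum_distrib_right)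
    finally have 2: "(\<Sum>x\<in>UNIV. \<Sum>y\<in>UNIV. a' x * b' y * f y) = s * (\<Sum>y\<in>UNIV. b' y * f y)" by simp
    show ?thesis by (simp add: right_diff_distrib sum_subtractf 1 2)
  qed
  have "\<bar>\<Sum>x\<in>UNIV. \<Sum>y\<in>UNIV. a' x * b' y * (f x - f y)\<bar> \<le> (\<Sum>x\<in>UNIV. \<Sum>y\<in>UNIV. a' x * b' y * D)"
    apply (rule order_trans[OF sum_abs], rule sum_mono)
    apply (rule order_trans[OF sum_abs], rule sum_mono)
    using a'0 fD by (simp add: abs_mult mult_left_mono)
  also have "\<dots> = (\<Sum>x\<in>UNIV. a' x * (\<Sum>y\<in>UNIV. b' y * D))"
    by (simp add: sum_distrib_left mult.assoc)
  also have "\<dots> = (\<Sum>x\<in>UNIV. a' x * (s * D))"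
    by (simp add: sum_distrib_right[symmetric] sb')
  also have "\<dots> = s * s * D" by (simp add: sum_distrib_right[symmetric] sa')
  finally have k2: "\<bar>s\<bar> * \<bar>(\<Sum>x\<in>UNIV. a' x * f x) - (\<Sum>y\<in>UNIV. b' y * f y)\<bar> \<le> s * s * D"
    using key by (metis abs_mult)
  have s0: "s \<ge> 0" using sa' a'0 by (metis sum_nonneg)
  show ?thesis
  proof (cases "s = 0")
    case True
    then have "\<forall>x\<in>UNIV. a' x = 0" "\<forall>x\<in>UNIV. b' x = 0" using sa' sb' a'0 by (simp_all add: sum_nonneg_eq_0_iff)
    then show ?thesis using e1 True s_def by simp
  next
    case False
    then have "s > 0" using s0 by simp
    then show ?thesis using k2 e1 s_def
      by (metis abs_of_pos mult.assoc mult_le_cancel_left_pos)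
  qed
qed

lemma sum_delta_mult: fixes f :: "'a::finite \<Rightarrow> real" shows "(\<Sum>x\<in>UNIV. (if m = x then 1 else 0) * f x) = (f m :: real)"
proof -
  have "(\<Sum>x\<in>UNIV. (if m = x then 1 else 0) * f x) = (\<Sum>x\<in>{m}. (if m = x then 1 else 0) * f x)"
    by (rule sum.mono_neutral_right) auto
  then show ?thesis by simp
qed

lemma pow_div_small:
  fixes r :: real assumes "0 \<le> r" "r < 1" "e > 0" "N > 0"
  shows "\<exists>M. \<forall>n\<ge>M. r ^ (n div N) < e"
proof -
  obtain k where k: "r ^ k < e" using real_arch_pow_inv[OF assms(3,2)] by blast
  show ?thesis
  proof (intro exI allI impI)
    fix n assume "n \<ge> k * N"
    then have "k \<le> n div N" using assms(4) by (metis div_le_mono div_mult_self_is_m)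
    then have "r ^ (n div N) \<le> r ^ k" using assms by (simp add: power_decreasing)
    then show "r ^ (n div N) < e" using k by simp
  qed
qed

lemma doeblin:
  fixes P :: "'s::finite \<Rightarrow> 's \<Rightarrow> real"
  assumes nn: "\<And>a b. P a b \<ge> 0" and rs: "\<And>a. (\<Sum>b\<in>UNIV. P a b) = 1"
    and pos: "\<And>a b. mat_pow P N a b \<ge> d" and d: "d > 0" and N: "N > 0"
  shows "\<exists>p. limiting P p \<and> stationary P p \<and> (\<forall>p'. stationary P p' \<longrightarrow> p' = p)"
proof -
  define r where "r = 1 - real CARD('s) * d"
  have "real CARD('s) * d \<le> (\<Sum>b\<in>UNIV. mat_pow P N undefined b)"
    using sum_mono[of UNIV "\<lambda>_. d" "mat_pow P N undefined", OF pos] by simp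
  then have r0: "r \<ge> 0" using mat_pow_rowsum[OF rs] by (simp add: r_def)
  have r1: "r < 1" using d by (simp add: r_def)
  have osc: "\<bar>mat_pow P n m1 m' - mat_pow P n m2 m'\<bar> \<le> r ^ (n div N)" for n m1 m2 m'
  proof (induction n arbitrary: m1 m2 rule: less_induct)
    case (less n)
    show ?case
    proof (cases "n < N")
      case True
      then show ?thesis using mat_pow_nonneg[OF nn] mat_pow_le1[OF nn rs]
        by (simp add: abs_le_iff) (smt (verit) mat_pow_le1 mat_pow_nonneg nn rs)
    next
      case False
      define k where "k = n - N"
      have nk: "n = N + k" using False by (simp add: k_def)
      have dv: "n div N = Suc (k div N)" using False N by (simp add: k_def le_div_geq)
      have IH: "\<bar>mat_pow P k x m' - mat_pow P k y m'\<bar> \<le> r ^ (k div N)" for x y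
        using less N nk by simp
      have "\<bar>(\<Sum>x\<in>UNIV. mat_pow P N m1 x * mat_pow P k x m') - (\<Sum>x\<in>UNIV. mat_pow P N m2 x * mat_pow P k x m')\<bar>
             \<le> (1 - real CARD('s) * d) * r ^ (k div N)"
        by (rule contract[OF pos pos mat_pow_rowsum[OF rs] mat_pow_rowsum[OF rs] IH])
      then have "\<bar>mat_pow P (N+k) m1 m' - mat_pow P (N+k) m2 m'\<bar> \<le> r ^ Suc (k div N)"
        by (simp add: mat_pow_add[symmetric] r_def[symmetric])
      then show ?thesis unfolding dv using nk by simp
    qed
  qed
  have cauchy: "\<bar>mat_pow P n' m m' - mat_pow P n m m'\<bar> \<le> r ^ (n div N)" if "n \<le> n'" for n n' m m'
  proof -
    have "\<bar>(\<Sum>x\<in>UNIV. mat_pow P (n'-n) m x * mat_pow P n x m') - (\<Sum>x\<in>UNIV. mat_pow P 0 m x * mat_pow P n x m')\<bar>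
             \<le> (1 - real CARD('s) * 0) * r ^ (n div N)"
      by (rule contract[OF mat_pow_nonneg[OF nn] mat_pow_nonneg[OF nn] mat_pow_rowsum[OF rs] mat_pow_rowsum[OF rs] osc])
    then show ?thesis using that by (simp add: mat_pow_add[symmetric] sum_delta_mult)
  qed
  have conv: "convergent (\<lambda>n. mat_pow P n m m')" for m m'
    unfolding Cauchy_convergent_iff[symmetric]
  proof (rule CauchyI)
    fix e :: real assume "e > 0"
    then obtain M where M: "\<And>n. n \<ge> M \<Longrightarrow> r ^ (n div N) < e" using pow_div_small[OF r0 r1 _ N] by blast
    show "\<exists>M. \<forall>a\<ge>M. \<forall>b\<ge>M. norm (mat_pow P a m m' - mat_pow P b m m') < e"
    proof (intro exI allI impI)
      fix a b assume ab: "a \<ge> M" "b \<ge> M"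
      show "norm (mat_pow P a m m' - mat_pow P b m m') < e"
      proof (cases "a \<le> b")
        case True
        then show ?thesis using cauchy[OF True, of m m'] M[OF ab(1)] by (simp add: abs_minus_commute)
      next
        case False
        then show ?thesis using cauchy[of b a m m'] M[OF ab(2)] by simp
      qed
    qed
  qed
  define c :: 's where "c = undefined"
  define p where "p m' = lim (\<lambda>n. mat_pow P n c m')" for m'
  have pc: "(\<lambda>n. mat_pow P n c m') \<longlonglongrightarrow> p m'" for m'
    using conv unfolding p_def convergent_LIMSEQ_iff by blast
  have diff0: "(\<lambda>n. mat_pow P n m m' - mat_pow P n c m') \<longlonglongrightarrow> 0" for m m'
  proof (rule LIMSEQ_I)
    fix e :: real assume "e > 0"
    then obtain M where M: "\<And>n. n \<ge> M \<Longrightarrow> r ^ (n div N) < e" using pow_div_small[OF r0 r1 _ N] by blast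
    show "\<exists>no. \<forall>n\<ge>no. norm (mat_pow P n m m' - mat_pow P n c m' - 0) < e"
    proof (intro exI allI impI)
      fix n assume "n \<ge> M"
      then show "norm (mat_pow P n m m' - mat_pow P n c m' - 0) < e"
        using M[of n] osc[of n m m' c] by simp
    qed
  qed
  have lim: "(\<lambda>n. mat_pow P n m m') \<longlonglongrightarrow> p m'" for m m'
    using tendsto_add[OF diff0[of m m'] pc[of m']] by simp
  have lp: "limiting P p" unfolding limiting_def using lim by blast
  have p0: "p m \<ge> 0" for m
    by (rule LIMSEQ_le_const[OF pc]) (auto intro: mat_pow_nonneg nn)
  have p1: "(\<Sum>m\<in>UNIV. p m) = 1"
  proof -
    have "(\<lambda>n. \<Sum>m\<in>UNIV. mat_pow P n c m) \<longlonglongrightarrow> (\<Sum>m\<in>UNIV. p m)"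
      by (intro tendsto_sum pc)
    then have "(\<lambda>n. 1::real) \<longlonglongrightarrow> (\<Sum>m\<in>UNIV. p m)" by (simp add: mat_pow_rowsum[OF rs])
    then show ?thesis using LIMSEQ_unique[OF tendsto_const] by metis
  qed
  have pP: "(\<Sum>m\<in>UNIV. p m * P m m') = p m'" for m'
  proof -
    have "(\<lambda>n. mat_pow P (Suc n) c m') \<longlonglongrightarrow> (\<Sum>m\<in>UNIV. p m * P m m')"
      by (simp only: mat_pow.simps) (intro tendsto_sum tendsto_mult_right pc)
    moreover have "(\<lambda>n. mat_pow P (Suc n) c m') \<longlonglongrightarrow> p m'"
      using pc LIMSEQ_Suc by blast
    ultimately show ?thesis using LIMSEQ_unique by blast
  qed
  have sp: "stationary P p" unfolding stationary_def using p0 p1 pP by blast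
  have uniq: "p' = p" if sp': "stationary P p'" for p'
  proof
    fix m'
    have inv: "(\<Sum>m\<in>UNIV. p' m * mat_pow P n m m') = p' m'" for n m'
    proof (induction n arbitrary: m')
      case 0 show ?case by (simp add: if_distrib cong: if_cong)
    next
      case (Suc n)
      have "(\<Sum>m\<in>UNIV. p' m * mat_pow P (Suc n) m m') = (\<Sum>x\<in>UNIV. (\<Sum>m\<in>UNIV. p' m * mat_pow P n m x) * P x m')"
        by (simp add: sum_distrib_left sum_distrib_right mult.assoc) (rule sum.swap)
      also have "\<dots> = p' m'" using Suc sp' by (simp add: stationary_def)
      finally show ?case .
    qed
    have "(\<lambda>n. \<Sum>m\<in>UNIV. p' m * mat_pow P n m m') \<longlonglongrightarrow> (\<Sum>m\<in>UNIV. p' m * p m')"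
      by (intro tendsto_sum tendsto_mult_left lim)
    moreover have "(\<Sum>m\<in>UNIV. p' m * p m') = p m'"
      using sp' by (simp add: stationary_def sum_distrib_right[symmetric])
    ultimately have "(\<lambda>n. p' m') \<longlonglongrightarrow> p m'" using inv by simp
    then show "p' m' = p m'" using LIMSEQ_unique[OF tendsto_const] by metis
  qed
  show ?thesis using lp sp uniq by blast
qed

lemma mat_pow_step_le:
  assumes nn: "\<And>a b. P a b \<ge> 0"
  shows "mat_pow P n a y * P y b \<le> mat_pow P (Suc n) a b"
  unfolding mat_pow.simps
  by (rule member_le_sum[where f="\<lambda>x. mat_pow P n a x * P x b"]) (auto intro!: mult_nonneg_nonneg mat_pow_nonneg nn)

lemma mat_pow_mono_pos:
  assumes nn: "\<And>a b. P a b \<ge> 0" and diag: "\<And>a. P a a > 0" and pos: "mat_pow P n a b > 0"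
  shows "mat_pow P (n + k) a b > 0"
proof (induction k)
  case 0 thus ?case using pos by simp
next
  case (Suc k)
  have "mat_pow P (n+k) a b * P b b \<le> mat_pow P (Suc (n+k)) a b"
    by (rule mat_pow_step_le[OF nn])
  moreover have "mat_pow P (n+k) a b * P b b > 0" using Suc diag by simp
  ultimately show ?case by simp
qed

lemma uniform_pos:
  fixes P :: "'s::finite \<Rightarrow> 's \<Rightarrow> real"
  assumes nn: "\<And>a b. P a b \<ge> 0" and diag: "\<And>a. P a a > 0" and irr: "\<And>a b. \<exists>n. mat_pow P n a b > 0"
  shows "\<exists>N d. N > 0 \<and> d > 0 \<and> (\<forall>a b. mat_pow P N a b \<ge> d)"
proof -
  define nf where "nf ab = (SOME n. mat_pow P n (fst ab) (snd ab) > 0)" for ab :: "'s \<times> 's"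
  have nf: "mat_pow P (nf (a,b)) a b > 0" for a b
    unfolding nf_def fst_conv snd_conv using irr[of a b] by (rule someI_ex)
  define N where "N = Suc (Max (range nf))"
  have Npos: "mat_pow P N a b > 0" for a b
  proof -
    have "nf (a,b) \<le> Max (range nf)" by simp
    then have "nf (a,b) \<le> N" unfolding N_def by (rule le_SucI)
    then have "N = nf (a,b) + (N - nf (a,b))" by simp
    then show ?thesis using mat_pow_mono_pos[OF nn diag nf, of a b "N - nf (a,b)"] by simp
  qed
  define d where "d = Min (range (\<lambda>ab. mat_pow P N (fst ab) (snd ab)))"
  have "d \<in> range (\<lambda>ab. mat_pow P N (fst ab) (snd ab))" unfolding d_def by (rule Min_in) auto
  then have "d > 0" using Npos by auto
  moreover have "d \<le> mat_pow P N a b" for a b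
    unfolding d_def by (rule Min_le) (auto intro: image_eqI[where x="(a,b)"])
  ultimately show ?thesis unfolding N_def by blast
qed

lemma flip_apply: "flip m i j = (if j = i then \<not> m i else m j)"
  by (simp add: flip_def)

lemma flip_neq: "flip m i \<noteq> m"
  by (metis flip_apply)

lemma flip_inj: "flip m i = flip m j \<longleftrightarrow> i = j"
  by (metis flip_apply)

lemma flip_sets: "{j. m j \<noteq> flip m i j} = {i}" "{j. m j = flip m i j} = - {i}"
  by (auto simp: flip_apply)

lemma P_eps_prod:
  "P_eps q e m m' = (\<Prod>i\<in>UNIV. if m i \<noteq> m' i then e * q i m else 1 - e * q i m)"
proof -
  have "- {i. m i \<noteq> m' i} = {i. m i = m' i}" by auto
  then show ?thesis unfolding P_eps_def by (simp add: prod.If_cases)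
qed

lemma P_eps_rowsum:
  fixes q :: "'k::finite \<Rightarrow> ('k \<Rightarrow> bool) \<Rightarrow> real"
  shows "(\<Sum>m'\<in>UNIV. P_eps q e m m') = 1"
proof -
  define f where "f i b = (if m i \<noteq> b then e * q i m else 1 - e * q i m)" for i b
  have "(\<Sum>m'\<in>UNIV. P_eps q e m m') = (\<Sum>g\<in>PiE UNIV (\<lambda>_. UNIV). \<Prod>i\<in>UNIV. f i (g i))"
    by (simp add: P_eps_prod f_def)
  also have "\<dots> = (\<Prod>i\<in>UNIV. \<Sum>b\<in>UNIV. f i b)"
    by (rule prod_sum_PiE[symmetric]) auto
  also have "\<dots> = 1"
    by (rule prod.neutral) (auto simp: f_def UNIV_bool)
  finally show ?thesis .
qed

lemma P_eps_nonneg: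
  assumes "\<And>i m. q i m \<ge> 0" "e \<ge> 0" "\<And>i m. e * q i m \<le> 1"
  shows "P_eps q e m m' \<ge> 0"
  unfolding P_eps_def using assms
  by (intro mult_nonneg_nonneg prod_nonneg) auto

lemma P_eps_diag: "P_eps q e m m = (\<Prod>i\<in>UNIV. 1 - e * q i m)"
  unfolding P_eps_def by simp

lemma P_eps_flip: "P_eps q e m (flip m i) = e * q i m * (\<Prod>j\<in>- {i}. 1 - e * q j m)"
  unfolding P_eps_def flip_sets by simp

lemma bd_rate_pos_flip:
  assumes "a \<noteq> b" "bd_rate q a b > 0"
  shows "\<exists>i. b = flip a i \<and> q i a > 0"
proof (rule ccontr)
  assume "\<not> ?thesis"
  then have "\<forall>i\<in>{i. b = flip a i}. q i a \<le> 0" by auto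
  then have "bd_rate q a b \<le> 0" using assms(1) unfolding bd_rate_def by (auto intro!: sum_nonpos)
  then show False using assms(2) by simp
qed

lemma part1:
  fixes q :: "'k::finite \<Rightarrow> ('k \<Rightarrow> bool) \<Rightarrow> real"
  assumes q_nonneg: "\<And>i m. q i m \<ge> 0"
    and irred: "ctmc_irreducible (bd_rate q)"
    and e: "e > 0" and eq: "\<And>i m. e * q i m < 1"
  shows "dtmc_irreducible (P_eps q e) \<and> dtmc_aperiodic (P_eps q e)
        \<and> (\<exists>!p. stationary (P_eps q e) p)
        \<and> limiting (P_eps q e) (stat_dist (P_eps q e))
        \<and> stationary (P_eps q e) (stat_dist (P_eps q e))"
proof -
  let ?P = "P_eps q e"
  have eq1: "e * q i m \<le> 1" for i m using eq[of i m] by simp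
  have nn: "?P a b \<ge> 0" for a b
    using P_eps_nonneg[OF q_nonneg _ eq1] e by simp
  have rs: "(\<Sum>b\<in>UNIV. ?P a b) = 1" for a by (rule P_eps_rowsum)
  have diag: "?P a a > 0" for a
    unfolding P_eps_diag using eq by (intro prod_pos) (auto simp: less_imp_le)
  have irr: "\<exists>n. mat_pow ?P n a b > 0" for a b
  proof -
    have "(a, b) \<in> {(x, y). x \<noteq> y \<and> bd_rate q x y > 0}\<^sup>*"
      using irred unfolding ctmc_irreducible_def by blast
    then show ?thesis
    proof (induction rule: rtrancl_induct)
      case base
      then show ?case by (intro exI[of _ 0]) simp
    next
      case (step y z)
      then obtain n where n: "mat_pow ?P n a y > 0" by blast
      from step(2) obtain i where i: "z = flip y i" "q i y > 0"
        using bd_rate_pos_flip by blast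
      have "?P y z > 0"
        unfolding i(1) P_eps_flip using e i(2) eq
        by (intro mult_pos_pos prod_pos) (auto simp: less_imp_le)
      then have "mat_pow ?P n a y * ?P y z > 0" using n by simp
      then have "mat_pow ?P (Suc n) a z > 0" using mat_pow_step_le[of ?P, OF nn, of n a y z] by simp
      then show ?case by blast
    qed
  qed
  have di: "dtmc_irreducible ?P" unfolding dtmc_irreducible_def using irr by blast
  have ap: "dtmc_aperiodic ?P"
    unfolding dtmc_aperiodic_def
  proof
    fix m
    have "1 \<in> {n. n > 0 \<and> mat_pow ?P n m m > 0}"
      using diag[of m] by (simp add: sum_delta_mult)
    then have "Gcd {n. n > 0 \<and> mat_pow ?P n m m > 0} dvd 1" by (rule Gcd_dvd)
    then show "Gcd {n. n > 0 \<and> mat_pow ?P n m m > 0} = (1::nat)" by simp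
  qed
  obtain N d where Nd: "N > 0" "d > 0" "\<And>a b. mat_pow ?P N a b \<ge> d"
    using uniform_pos[OF nn diag irr] by blast
  obtain p where p: "limiting ?P p" "stationary ?P p" "\<And>p'. stationary ?P p' \<Longrightarrow> p' = p"
    using doeblin[OF nn rs Nd(3) Nd(2) Nd(1)] by blast
  have sd: "stat_dist ?P = p"
    unfolding stat_dist_def using p(2,3) by (rule the_equality)
  have "\<exists>!p. stationary ?P p" using p(2,3) by blast
  then show ?thesis using di ap p(1,2) sd by simp
qed

lemma prod_bound:
  fixes x :: "'a \<Rightarrow> real"
  assumes "finite A" "\<And>i. i \<in> A \<Longrightarrow> 0 \<le> x i \<and> x i \<le> 1"
  shows "1 - sum x A \<le> (\<Prod>i\<in>A. 1 - x i) \<and> (\<Prod>i\<in>A. 1 - x i) \<le> 1 - sum x A + (sum x A)^2"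
  using assms
proof (induction A rule: finite_induct)
  case empty thus ?case by simp
next
  case (insert a A)
  define p where "p = (\<Prod>i\<in>A. 1 - x i)"
  define s where "s = sum x A"
  have IH: "1 - s \<le> p" "p \<le> 1 - s + s^2" using insert by (auto simp: p_def s_def)
  have xa: "0 \<le> x a" "x a \<le> 1" using insert by auto
  have s0: "s \<ge> 0" using insert by (auto simp: s_def intro: sum_nonneg)
  have eqs: "(\<Prod>i\<in>insert a A. 1 - x i) = (1 - x a) * p" "sum x (insert a A) = x a + s"
    using insert by (auto simp: p_def s_def)
  have l: "(1 - x a) * (1 - s) \<le> (1 - x a) * p" using IH xa by (intro mult_left_mono) auto
  have u: "x a * (1 - p) \<le> x a * s" using IH xa by (intro mult_left_mono) auto
  have xs: "0 \<le> x a * s" using xa s0 by simp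
  have xx: "0 \<le> x a * x a" by simp
  have e1: "(1 - x a) * p = p - x a * p" by (simp add: algebra_simps)
  have e2: "(1 - x a) * (1 - s) = 1 - x a - s + x a * s" by (simp add: algebra_simps)
  have e3: "x a * (1 - p) = x a - x a * p" by (simp add: algebra_simps)
  have e4: "(x a + s)^2 = x a * x a + 2 * (x a * s) + s^2" by (simp add: algebra_simps power2_eq_square)
  show ?case unfolding eqs
  proof
    show "1 - (x a + s) \<le> (1 - x a) * p" using l e2 xs by linarith
    show "(1 - x a) * p \<le> 1 - (x a + s) + (x a + s)^2"
      unfolding e1 e4 using e3 u IH(2) xs xx by linarith
  qed
qed

lemma flip_eq_iff: "m' = flip m i \<longleftrightarrow> (m' i = (\<not> m i) \<and> (\<forall>j. j \<noteq> i \<longrightarrow> m' j = m j))"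
  by (auto simp: fun_eq_iff flip_apply)

lemma P_eps_two_bound:
  fixes q :: "'k::finite \<Rightarrow> ('k \<Rightarrow> bool) \<Rightarrow> real"
  assumes x01: "\<And>i. 0 \<le> e * q i m \<and> e * q i m \<le> 1"
    and ne: "m \<noteq> m'" and nf: "\<And>i. m' \<noteq> flip m i"
  shows "\<exists>a b. a \<noteq> b \<and> 0 \<le> P_eps q e m m' \<and> P_eps q e m m' \<le> e * q a m * (e * q b m)"
proof -
  obtain a where a: "m a \<noteq> m' a" using ne by (auto simp: fun_eq_iff)
  obtain b where b: "b \<noteq> a" "m b \<noteq> m' b"
  proof -
    have "\<exists>b. b \<noteq> a \<and> m b \<noteq> m' b"
    proof (rule ccontr)
      assume "\<not> ?thesis"
      then have "m' = flip m a" using a by (auto simp: flip_eq_iff)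
      then show False using nf by blast
    qed
    then show ?thesis using that by blast
  qed
  define D where "D = {j. m j \<noteq> m' j}"
  define x where "x j = e * q j m" for j
  have aD: "a \<in> D" and bD: "b \<in> D - {a}" using a b by (auto simp: D_def)
  have r1: "(\<Prod>j\<in>D - {a} - {b}. x j) \<le> 1" using x01 by (intro prod_le_1) (auto simp: x_def)
  have r0: "(\<Prod>j\<in>D - {a} - {b}. x j) \<ge> 0" using x01 by (intro prod_nonneg) (auto simp: x_def)
  have "(\<Prod>j\<in>D. x j) = x a * (x b * (\<Prod>j\<in>D - {a} - {b}. x j))"
    using prod.remove[OF _ aD, of x] prod.remove[OF _ bD, of x] by simp
  also have "\<dots> \<le> x a * x b"
    using x01 r1 r0 by (intro mult_left_mono mult_right_le_one_le) (auto simp: x_def)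
  finally have pd: "(\<Prod>j\<in>D. x j) \<le> x a * x b" .
  have pd0: "(\<Prod>j\<in>D. x j) \<ge> 0" using x01 by (intro prod_nonneg) (auto simp: x_def)
  have c1: "(\<Prod>j\<in>{j. m j = m' j}. 1 - x j) \<le> 1" using x01 by (intro prod_le_1) (auto simp: x_def)
  have c0: "(\<Prod>j\<in>{j. m j = m' j}. 1 - x j) \<ge> 0" using x01 by (intro prod_nonneg) (auto simp: x_def)
  have P: "P_eps q e m m' = (\<Prod>j\<in>D. x j) * (\<Prod>j\<in>{j. m j = m' j}. 1 - x j)"
    by (simp add: P_eps_def D_def x_def)
  have "P_eps q e m m' \<le> (\<Prod>j\<in>D. x j)" unfolding P using pd0 c1 c0 by (simp add: mult_left_le)
  moreover have "0 \<le> P_eps q e m m'" unfolding P using pd0 c0 by simp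
  ultimately show ?thesis using pd b(1) unfolding x_def by (metis order_trans)
qed

lemma flip_neq2: "m \<noteq> flip m i"
  using flip_neq[of m i] by metis

lemma bd_rate_diag: "bd_rate q m m = - total_rate q m"
  by (simp add: bd_rate_def total_rate_def)

lemma bd_rate_flip: "bd_rate q m (flip m i) = q i m"
proof -
  have "{j. flip m i = flip m j} = {i}" by (auto simp: flip_inj)
  then show ?thesis using flip_neq[of m i] by (simp add: bd_rate_def)
qed

lemma bd_rate_other: "m' \<noteq> m \<Longrightarrow> (\<And>i. m' \<noteq> flip m i) \<Longrightarrow> bd_rate q m m' = 0"
  by (simp add: bd_rate_def)

lemma bd_rate_alt:
  fixes q :: "'k::finite \<Rightarrow> ('k \<Rightarrow> bool) \<Rightarrow> real"
  shows "bd_rate q m m' = (if m' = m then - total_rate q m else 0) + (\<Sum>i\<in>UNIV. if m' = flip m i then q i m else 0)"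
proof (cases "m' = m")
  case True
  then show ?thesis by (simp add: bd_rate_diag flip_neq2)
next
  case False
  then show ?thesis by (simp add: bd_rate_def sum.inter_filter[symmetric])
qed

lemma bd_rate_rowsum:
  fixes q :: "'k::finite \<Rightarrow> ('k \<Rightarrow> bool) \<Rightarrow> real"
  shows "(\<Sum>m'\<in>UNIV. bd_rate q m m') = 0"
proof -
  have A: "(\<Sum>m'\<in>UNIV. \<Sum>i\<in>UNIV. if m' = flip m i then q i m else 0) = (\<Sum>i\<in>UNIV. q i m)"
    by (subst sum.swap) simp
  show ?thesis by (simp add: bd_rate_alt sum.distrib A total_rate_def)
qed

lemma bd_rate_offdiag_nonneg:
  assumes "\<And>i m. q i m \<ge> 0" "m \<noteq> m'" shows "bd_rate q m m' \<ge> 0"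
  using assms unfolding bd_rate_def by (auto intro: sum_nonneg)

lemma total_rate_pos:
  fixes q :: "'k::finite \<Rightarrow> ('k \<Rightarrow> bool) \<Rightarrow> real"
  assumes q_nonneg: "\<And>i m. q i m \<ge> 0" and irred: "ctmc_irreducible (bd_rate q)"
  shows "total_rate q m > 0"
proof -
  have "(m, flip m undefined) \<in> {(a, b). a \<noteq> b \<and> bd_rate q a b > 0}\<^sup>*"
    using irred unfolding ctmc_irreducible_def by blast
  then obtain y where "m \<noteq> y" "bd_rate q m y > 0"
    using flip_neq[of m undefined] by (cases rule: converse_rtranclE) auto
  then obtain i where "q i m > 0" using bd_rate_pos_flip by blast
  then show ?thesis unfolding total_rate_def
    using q_nonneg by (intro sum_pos2[of UNIV i]) auto
qed

lemma R_bound: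
  fixes q :: "'k::finite \<Rightarrow> ('k \<Rightarrow> bool) \<Rightarrow> real"
  assumes q_nonneg: "\<And>i m. q i m \<ge> 0" and e0: "e \<ge> 0" and e1: "\<And>i. e * q i m \<le> 1"
  shows "\<bar>P_eps q e m m' - (if m = m' then 1 else 0) - e * bd_rate q m m'\<bar> \<le> (e * total_rate q m)^2"
proof -
  define x where "x i = e * q i m" for i
  have x01: "0 \<le> x i \<and> x i \<le> 1" for i using e0 e1 q_nonneg by (simp add: x_def)
  have sx: "sum x UNIV = e * total_rate q m" unfolding x_def total_rate_def by (rule sum_distrib_left[symmetric])
  have sx0: "sum x UNIV \<ge> 0" using x01 by (simp add: sum_nonneg)
  show ?thesis
  proof (cases "m' = m")
    case True
    have pb: "1 - sum x UNIV \<le> (\<Prod>i\<in>UNIV. 1 - x i) \<and> (\<Prod>i\<in>UNIV. 1 - x i) \<le> 1 - sum x UNIV + (sum x UNIV)^2"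
      by (rule prod_bound) (use x01 in auto)
    have "P_eps q e m m' - (if m = m' then 1 else 0) - e * bd_rate q m m' = (\<Prod>i\<in>UNIV. 1 - x i) - 1 + e * total_rate q m"
      using True by (simp add: P_eps_diag bd_rate_diag x_def)
    then show ?thesis using pb sx by auto
  next
    case False
    show ?thesis
    proof (cases "\<exists>i. m' = flip m i")
      case True
      then obtain i where i: "m' = flip m i" by blast
      have pb: "1 - sum x (- {i}) \<le> (\<Prod>j\<in>- {i}. 1 - x j)"
        using prod_bound[of "- {i}" x] x01 by auto
      have p1: "(\<Prod>j\<in>- {i}. 1 - x j) \<le> 1" using x01 by (intro prod_le_1) auto
      have s1: "sum x (- {i}) \<le> sum x UNIV" using x01 by (intro sum_mono2) auto
      have xi: "x i \<le> sum x UNIV" using x01 by (intro member_le_sum) auto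
      have "P_eps q e m m' - (if m = m' then 1 else 0) - e * bd_rate q m m' = - (x i * (1 - (\<Prod>j\<in>- {i}. 1 - x j)))"
        using False i by (simp add: P_eps_flip bd_rate_flip x_def algebra_simps)
      moreover have "0 \<le> x i * (1 - (\<Prod>j\<in>- {i}. 1 - x j))" using x01 p1 by simp
      moreover have "x i * (1 - (\<Prod>j\<in>- {i}. 1 - x j)) \<le> sum x UNIV * sum x UNIV"
        using x01 pb s1 xi sx0 p1 by (intro mult_mono) auto
      ultimately show ?thesis using sx by (simp add: power2_eq_square)
    next
      case nf: False
      obtain a b where ab: "a \<noteq> b" "0 \<le> P_eps q e m m'" "P_eps q e m m' \<le> x a * x b"
        using P_eps_two_bound[of e q m m'] x01 False nf unfolding x_def by metis
      have "x a + x b = sum x {a, b}" using ab(1) by simp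
      also have "\<dots> \<le> sum x UNIV" using x01 by (intro sum_mono2) auto
      finally have "x a * x b \<le> (sum x UNIV)^2" using x01[of a] x01[of b]
        by (smt (verit, ccfv_SIG) mult_mono power2_eq_square mult_nonneg_nonneg)
      moreover have "bd_rate q m m' = 0" using False nf by (intro bd_rate_other) auto
      ultimately show ?thesis using ab False sx by auto
    qed
  qed
qed

lemma finite_max_exists: fixes h :: "'s::finite \<Rightarrow> real" shows "\<exists>M. \<forall>m. h m \<le> h M"
proof -
  have "Max (range h) \<in> range h" by (rule Max_in) auto
  then obtain M where M: "Max (range h) = h M" by blast
  have "h m \<le> Max (range h)" for m by (rule Max_ge) auto
  then show ?thesis using M by metis
qed

lemma kernel:
  fixes q :: "'k::finite \<Rightarrow> ('k \<Rightarrow> bool) \<Rightarrow> real" and \<pi> d :: "('k \<Rightarrow> bool) \<Rightarrow> real"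
  assumes q_nonneg: "\<And>i m. q i m \<ge> 0" and irred: "ctmc_irreducible (bd_rate q)"
    and pi_pos: "\<And>m. \<pi> m > 0" and pi_sum: "(\<Sum>m\<in>UNIV. \<pi> m) = 1" and rev: "reversible (bd_rate q) \<pi>"
    and dQ: "\<And>m'. (\<Sum>m\<in>UNIV. d m * bd_rate q m m') = 0" and ds: "(\<Sum>m\<in>UNIV. d m) = 0"
  shows "d m = 0"
proof -
  define h where "h m = d m / \<pi> m" for m
  have dh: "d m = h m * \<pi> m" for m using pi_pos[of m] by (simp add: h_def)
  have harm: "(\<Sum>m\<in>UNIV. bd_rate q a m * h m) = 0" for a
  proof -
    have "0 = (\<Sum>m\<in>UNIV. h m * (\<pi> m * bd_rate q m a))" using dQ[of a] by (simp add: dh mult.assoc)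
    also have "\<dots> = (\<Sum>m\<in>UNIV. h m * (\<pi> a * bd_rate q a m))"
    proof (rule sum.cong[OF refl])
      fix m
      have "\<pi> m * bd_rate q m a = \<pi> a * bd_rate q a m" using rev unfolding reversible_def by blast
      then show "h m * (\<pi> m * bd_rate q m a) = h m * (\<pi> a * bd_rate q a m)" by simp
    qed
    also have "\<dots> = \<pi> a * (\<Sum>m\<in>UNIV. bd_rate q a m * h m)" by (simp add: sum_distrib_left mult_ac)
    finally show ?thesis using pi_pos[of a] by simp
  qed
  obtain M where M: "\<And>m. h m \<le> h M" using finite_max_exists[of h] by blast
  have stp: "h b = h M" if ha: "h a = h M" and ab: "a \<noteq> b" and pos: "bd_rate q a b > 0" for a b
  proof -
    have "(\<Sum>m\<in>UNIV. bd_rate q a m * (h m - h a)) = (\<Sum>m\<in>UNIV. bd_rate q a m * h m) - (\<Sum>m\<in>UNIV. bd_rate q a m) * h a"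
      by (simp add: right_diff_distrib sum_subtractf sum_distrib_right)
    then have s0: "(\<Sum>m\<in>UNIV. - (bd_rate q a m * (h m - h a))) = 0"
      using harm[of a] bd_rate_rowsum[of q a] by (simp add: sum_negf)
    have nn: "0 \<le> - (bd_rate q a m * (h m - h a))" for m
    proof (cases "m = a")
      case True thus ?thesis by simp
    next
      case False
      then have "bd_rate q a m \<ge> 0" using bd_rate_offdiag_nonneg[of q a m] q_nonneg by auto
      moreover have "h m - h a \<le> 0" using M ha by simp
      ultimately show ?thesis by (simp add: mult_nonneg_nonpos)
    qed
    have "\<forall>m\<in>UNIV. - (bd_rate q a m * (h m - h a)) = 0"
      using sum_nonneg_eq_0_iff[OF finite[of UNIV], of "\<lambda>m. - (bd_rate q a m * (h m - h a))"] nn s0 by blast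
    then have "- (bd_rate q a b * (h b - h a)) = 0" by blast
    then show ?thesis using pos ha by simp
  qed
  have all: "h m = h M" for m
  proof -
    have "(M, m) \<in> {(a, b). a \<noteq> b \<and> bd_rate q a b > 0}\<^sup>*"
      using irred unfolding ctmc_irreducible_def by blast
    then show ?thesis
    proof (induction rule: rtrancl_induct)
      case base show ?case by simp
    next
      case (step y z)
      have yz: "y \<noteq> z" "bd_rate q y z > 0" using step(2) by auto
      show ?case by (rule stp[OF step.IH yz])
    qed
  qed
  have dM: "d m = h M * \<pi> m" for m using dh[of m] all[of m] by simp
  have "0 = (\<Sum>m\<in>UNIV. h M * \<pi> m)" using ds by (simp add: dM)
  also have "\<dots> = h M" using pi_sum by (simp add: sum_distrib_left[symmetric])
  finally show ?thesis using dM[of m] by simp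
qed

lemma vnorm_zero: "is_vnorm N \<Longrightarrow> N (\<lambda>m. 0) = 0"
  unfolding is_vnorm_def by auto

lemma vnorm_sum:
  assumes N: "is_vnorm N" and A: "finite A"
  shows "N (\<lambda>m. \<Sum>j\<in>A. f j m) \<le> (\<Sum>j\<in>A. N (f j))"
  using A
proof (induction A rule: finite_induct)
  case empty thus ?case using vnorm_zero[OF N] by simp
next
  case (insert a A)
  have "N (\<lambda>m. \<Sum>j\<in>insert a A. f j m) = N (\<lambda>m. f a m + (\<Sum>j\<in>A. f j m))"
    using insert by simp
  also have "\<dots> \<le> N (f a) + N (\<lambda>m. \<Sum>j\<in>A. f j m)"
  proof -
    have tri: "\<And>x y. N (\<lambda>m. x m + y m) \<le> N x + N y" using N unfolding is_vnorm_def by blast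
    show ?thesis using tri[of "f a" "\<lambda>m. \<Sum>j\<in>A. f j m"] by simp
  qed
  also have "\<dots> \<le> N (f a) + (\<Sum>j\<in>A. N (f j))" using insert by simp
  finally show ?case using insert by simp
qed

lemma vnorm_bound:
  fixes x :: "'s::finite \<Rightarrow> real"
  assumes N: "is_vnorm N"
  shows "N x \<le> (\<Sum>j\<in>UNIV. \<bar>x j\<bar> * N (\<lambda>m. if m = j then 1 else 0))"
proof -
  have "x = (\<lambda>m. \<Sum>j\<in>UNIV. x j * (if m = j then 1 else 0))"
    by (rule ext) (simp add: if_distrib cong: if_cong)
  then have "N x = N (\<lambda>m. \<Sum>j\<in>UNIV. x j * (if m = j then 1 else 0))" by simp
  also have "\<dots> \<le> (\<Sum>j\<in>UNIV. N (\<lambda>m. x j * (if m = j then 1 else 0)))"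
    by (rule vnorm_sum[OF N]) simp
  also have "\<dots> = (\<Sum>j\<in>UNIV. \<bar>x j\<bar> * N (\<lambda>m. if m = j then 1 else 0))"
    using N unfolding is_vnorm_def by simp
  finally show ?thesis .
qed

lemma eps_setup:
  fixes q :: "'k::finite \<Rightarrow> ('k \<Rightarrow> bool) \<Rightarrow> real"
  assumes q_nonneg: "\<And>i m. q i m \<ge> 0"
  obtains e0 where "e0 > 0" "\<And>\<epsilon> i m. 0 < \<epsilon> \<Longrightarrow> \<epsilon> < e0 \<Longrightarrow> \<epsilon> * q i m < 1"
proof -
  define S where "S = (\<Sum>m\<in>UNIV. \<Sum>i\<in>UNIV. q i m)"
  have S0: "S \<ge> 0" using q_nonneg by (simp add: S_def sum_nonneg)
  have qS: "q i m \<le> S" for i m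
  proof -
    have "q i m \<le> (\<Sum>i\<in>UNIV. q i m)" using q_nonneg by (intro member_le_sum) auto
    also have "\<dots> \<le> S" unfolding S_def using q_nonneg
      by (intro member_le_sum[of m UNIV "\<lambda>m. \<Sum>i\<in>UNIV. q i m"]) (auto intro: sum_nonneg)
    finally show ?thesis .
  qed
  define e0 where "e0 = 1 / (1 + S)"
  have e0pos: "e0 > 0" using S0 by (simp add: e0_def)
  have small: "\<epsilon> * q i m < 1" if "0 < \<epsilon>" "\<epsilon> < e0" for \<epsilon> i m
  proof -
    have "\<epsilon> * q i m \<le> \<epsilon> * S" using qS that by (simp add: mult_left_mono)
    moreover have "\<epsilon> * (1 + S) < 1" using that S0 by (simp add: e0_def field_simps)
    moreover have "\<epsilon> * (1 + S) = \<epsilon> + \<epsilon> * S" by (simp add: algebra_simps)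
    ultimately show ?thesis using that by linarith
  qed
  show ?thesis by (rule that[OF e0pos small])
qed

lemma part2:
  fixes q :: "'k::finite \<Rightarrow> ('k \<Rightarrow> bool) \<Rightarrow> real" and \<pi> :: "('k \<Rightarrow> bool) \<Rightarrow> real"
  assumes q_nonneg: "\<And>i m. q i m \<ge> 0"
    and irred: "ctmc_irreducible (bd_rate q)"
    and pi_pos: "\<And>m. \<pi> m > 0"
    and pi_sum: "(\<Sum>m\<in>UNIV. \<pi> m) = 1"
    and rev: "reversible (bd_rate q) \<pi>"
    and N: "is_vnorm N"
  shows "(\<lambda>\<epsilon>. N (\<lambda>m. stat_dist (P_eps q \<epsilon>) m - \<pi> m)) \<in> O[at_right 0](\<lambda>\<epsilon>. \<epsilon>)"
proof -
  obtain e0 where e0: "e0 > 0" and small: "\<And>\<epsilon> i m. 0 < \<epsilon> \<Longrightarrow> \<epsilon> < e0 \<Longrightarrow> \<epsilon> * q i m < 1"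
    using eps_setup[of q, OF q_nonneg] by blast
  define L :: "real^('k\<Rightarrow>bool) \<Rightarrow> real^('k\<Rightarrow>bool)" where "L v = (\<chi> m'. \<Sum>m\<in>UNIV. v$m * bd_rate q m m')" for v
  have lin: "linear L"
    by (rule linearI) (simp_all add: L_def vec_eq_iff algebra_simps sum.distrib sum_distrib_left)
  have bl: "bounded_linear L" by (rule linear_conv_bounded_linear[THEN iffD1, OF lin])
  define one :: "real^('k\<Rightarrow>bool)" where "one = (\<chi> _. 1)"
  define Sub where "Sub = {v. one \<bullet> v = 0}"
  have inner_one: "one \<bullet> v = (\<Sum>m\<in>UNIV. v$m)" for v by (simp add: one_def inner_vec_def)
  have inj: "\<forall>v\<in>Sub. L v = 0 \<longrightarrow> v = 0"
  proof (intro ballI impI)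
    fix v assume v: "v \<in> Sub" "L v = 0"
    have ds: "(\<Sum>m\<in>UNIV. v$m) = 0" using v(1) by (simp add: Sub_def inner_one)
    have dQ: "(\<Sum>m\<in>UNIV. v$m * bd_rate q m m') = 0" for m'
    proof -
      have "L v $ m' = 0" using v(2) by simp
      then show ?thesis by (simp add: L_def)
    qed
    have "v$m = 0" for m using kernel[OF q_nonneg irred pi_pos pi_sum rev, of "\<lambda>m. v$m"] ds dQ by blast
    then show "v = 0" by (simp add: vec_eq_iff)
  qed
  have "\<exists>e>0. \<forall>x\<in>Sub. norm (L x) \<ge> e * norm x"
    by (rule injective_imp_isometric) (use bl inj in \<open>auto simp: Sub_def closed_hyperplane subspace_hyperplane\<close>)
  then obtain c where c: "c > 0" "\<And>v. v \<in> Sub \<Longrightarrow> c * norm v \<le> norm (L v)" by blast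
  define C1 where "C1 = (\<Sum>m\<in>UNIV. (total_rate q m)^2)"
  define C2 where "C2 = (\<Sum>j\<in>UNIV. N (\<lambda>m. if m = j then 1 else 0))"
  define K where "K = real CARD('k\<Rightarrow>bool) * C1 / c * C2"
  have C2nn: "C2 \<ge> 0" using N unfolding C2_def is_vnorm_def by (simp add: sum_nonneg)
  have bound: "N (\<lambda>m. stat_dist (P_eps q \<epsilon>) m - \<pi> m) \<le> K * \<epsilon>" if e: "0 < \<epsilon>" "\<epsilon> < e0" for \<epsilon>
  proof -
    let ?P = "P_eps q \<epsilon>"
    define sd where "sd = stat_dist ?P"
    have st: "stationary ?P sd"
      using part1[OF q_nonneg irred e(1) small[OF e]] unfolding sd_def by blast
    have sd0: "sd m \<ge> 0" for m using st by (simp add: stationary_def)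
    have sdsum: "(\<Sum>m\<in>UNIV. sd m) = 1" using st by (simp add: stationary_def)
    have sd1: "sd m \<le> 1" for m
    proof -
      have "sd m \<le> (\<Sum>m\<in>UNIV. sd m)" using sd0 by (intro member_le_sum) auto
      then show ?thesis using sdsum by simp
    qed
    have e1: "\<epsilon> * q i m \<le> 1" for i m using small[OF e, of i m] by simp
    have sQ: "\<bar>\<Sum>m\<in>UNIV. sd m * bd_rate q m m'\<bar> \<le> \<epsilon> * C1" for m'
    proof -
      define R where "R m = ?P m m' - (if m = m' then 1 else 0) - \<epsilon> * bd_rate q m m'" for m
      have Rb: "\<bar>R m\<bar> \<le> (\<epsilon> * total_rate q m)^2" for m unfolding R_def
        by (rule R_bound[OF q_nonneg]) (use e e1 in auto)
      have st': "(\<Sum>m\<in>UNIV. sd m * ?P m m') = sd m'" using st by (simp add: stationary_def)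
      have dl: "(\<Sum>m\<in>UNIV. sd m * (if m = m' then 1 else 0)) = sd m'"
      proof -
        have "(\<Sum>m\<in>UNIV. sd m * (if m = m' then 1 else 0)) = (\<Sum>m\<in>UNIV. if m = m' then sd m else 0)"
          by (rule sum.cong) auto
        then show ?thesis by simp
      qed
      have "(\<Sum>m\<in>UNIV. sd m * R m) = (\<Sum>m\<in>UNIV. sd m * ?P m m') - (\<Sum>m\<in>UNIV. sd m * (if m = m' then 1 else 0))
              - \<epsilon> * (\<Sum>m\<in>UNIV. sd m * bd_rate q m m')"
        by (simp add: R_def right_diff_distrib sum_subtractf sum_distrib_left mult_ac)
      then have eq: "\<epsilon> * (\<Sum>m\<in>UNIV. sd m * bd_rate q m m') = - (\<Sum>m\<in>UNIV. sd m * R m)"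
        using st' dl by simp
      have each: "\<bar>sd m * R m\<bar> \<le> (\<epsilon> * total_rate q m)^2" for m
      proof -
        have "\<bar>sd m * R m\<bar> = sd m * \<bar>R m\<bar>" using sd0[of m] by (simp add: abs_mult)
        also have "\<dots> \<le> 1 * \<bar>R m\<bar>" using sd1[of m] by (intro mult_right_mono) auto
        also have "\<dots> \<le> (\<epsilon> * total_rate q m)^2" using Rb[of m] by simp
        finally show ?thesis .
      qed
      have "\<bar>\<Sum>m\<in>UNIV. sd m * R m\<bar> \<le> (\<Sum>m\<in>UNIV. (\<epsilon> * total_rate q m)^2)"
        by (rule order_trans[OF sum_abs sum_mono]) (rule each)
      also have "\<dots> = \<epsilon> * (\<epsilon> * C1)"
        by (simp add: C1_def power_mult_distrib sum_distrib_left power2_eq_square mult_ac)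
      finally have fin: "\<bar>\<Sum>m\<in>UNIV. sd m * R m\<bar> \<le> \<epsilon> * (\<epsilon> * C1)" .
      have "\<epsilon> * \<bar>\<Sum>m\<in>UNIV. sd m * bd_rate q m m'\<bar> = \<bar>\<Sum>m\<in>UNIV. sd m * R m\<bar>"
        using eq e(1) by (metis abs_minus_cancel abs_mult abs_of_pos)
      then have "\<epsilon> * \<bar>\<Sum>m\<in>UNIV. sd m * bd_rate q m m'\<bar> \<le> \<epsilon> * (\<epsilon> * C1)" using fin by simp
      then show ?thesis using e(1) by (simp add: mult_le_cancel_left_pos)
    qed
    define v where "v = (\<chi> m. sd m - \<pi> m)"
    have vS: "v \<in> Sub" unfolding Sub_def inner_one v_def using sdsum pi_sum by (simp add: sum_subtractf)
    have piQ: "(\<Sum>m\<in>UNIV. \<pi> m * bd_rate q m m') = 0" for m'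
    proof -
      have "(\<Sum>m\<in>UNIV. \<pi> m * bd_rate q m m') = (\<Sum>m\<in>UNIV. \<pi> m' * bd_rate q m' m)"
      proof (rule sum.cong[OF refl])
        fix m show "\<pi> m * bd_rate q m m' = \<pi> m' * bd_rate q m' m"
          using rev unfolding reversible_def by blast
      qed
      also have "\<dots> = \<pi> m' * (\<Sum>m\<in>UNIV. bd_rate q m' m)" by (simp add: sum_distrib_left)
      also have "\<dots> = 0" by (simp add: bd_rate_rowsum)
      finally show ?thesis .
    qed
    have Lv: "L v $ m' = (\<Sum>m\<in>UNIV. sd m * bd_rate q m m')" for m'
      using piQ[of m'] by (simp add: L_def v_def left_diff_distrib sum_subtractf)
    have "norm (L v) \<le> (\<Sum>m'\<in>UNIV. \<bar>L v $ m'\<bar>)" by (rule norm_le_l1_cart)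
    also have "\<dots> \<le> (\<Sum>m'\<in>(UNIV::('k\<Rightarrow>bool) set). \<epsilon> * C1)"
    proof (rule sum_mono)
      fix m' :: "'k \<Rightarrow> bool"
      show "\<bar>L v $ m'\<bar> \<le> \<epsilon> * C1" using sQ[of m'] Lv[of m'] by simp
    qed
    also have "\<dots> = real CARD('k\<Rightarrow>bool) * (\<epsilon> * C1)" by simp
    finally have nLv: "norm (L v) \<le> real CARD('k\<Rightarrow>bool) * (\<epsilon> * C1)" .
    have nv: "norm v \<le> real CARD('k\<Rightarrow>bool) * C1 / c * \<epsilon>"
    proof -
      have "c * norm v \<le> real CARD('k\<Rightarrow>bool) * (\<epsilon> * C1)" using c(2)[OF vS] nLv by linarith
      then show ?thesis using c(1) by (simp add: field_simps)
    qed
    have "N (\<lambda>m. sd m - \<pi> m) \<le> (\<Sum>j\<in>UNIV. \<bar>sd j - \<pi> j\<bar> * N (\<lambda>m. if m = j then 1 else 0))"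
      by (rule vnorm_bound[OF N])
    also have "\<dots> \<le> (\<Sum>j\<in>UNIV. norm v * N (\<lambda>m. if m = j then 1 else 0))"
    proof (rule sum_mono)
      fix j
      have "\<bar>sd j - \<pi> j\<bar> \<le> norm v" using component_le_norm_cart[of v j] by (simp add: v_def)
      moreover have "N (\<lambda>m. if m = j then 1 else 0) \<ge> 0" using N unfolding is_vnorm_def by blast
      ultimately show "\<bar>sd j - \<pi> j\<bar> * N (\<lambda>m. if m = j then 1 else 0) \<le> norm v * N (\<lambda>m. if m = j then 1 else 0)"
        by (rule mult_right_mono)
    qed
    also have "\<dots> = norm v * C2" by (simp add: C2_def sum_distrib_left)
    also have "\<dots> \<le> real CARD('k\<Rightarrow>bool) * C1 / c * \<epsilon> * C2" using nv C2nn by (rule mult_right_mono)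
    also have "\<dots> = K * \<epsilon>" by (simp add: K_def)
    finally show ?thesis unfolding sd_def .
  qed
  show ?thesis
  proof (rule bigoI[where c=K])
    show "\<forall>\<^sub>F \<epsilon> in at_right 0. norm (N (\<lambda>m. stat_dist (P_eps q \<epsilon>) m - \<pi> m)) \<le> K * norm \<epsilon>"
    proof (rule eventually_at_rightI[of 0 e0])
      fix \<epsilon> :: real assume "\<epsilon> \<in> {0<..<e0}"
      then have e: "0 < \<epsilon>" "\<epsilon> < e0" by auto
      have "N (\<lambda>m. stat_dist (P_eps q \<epsilon>) m - \<pi> m) \<ge> 0" using N unfolding is_vnorm_def by blast
      then show "norm (N (\<lambda>m. stat_dist (P_eps q \<epsilon>) m - \<pi> m)) \<le> K * norm \<epsilon>"
        using bound[OF e] e by simp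
    qed (rule e0)
  qed
qed

lemma rho_bounds:
  fixes q :: "'k::finite \<Rightarrow> ('k \<Rightarrow> bool) \<Rightarrow> real"
  assumes q_nonneg: "\<And>i m. q i m \<ge> 0" and e: "0 < \<epsilon>" and e1: "\<And>i. \<epsilon> * q i m \<le> 1"
  shows "total_rate q m - \<epsilon> * (total_rate q m)^2 \<le> (1 - P_eps q \<epsilon> m m) / \<epsilon>
         \<and> (1 - P_eps q \<epsilon> m m) / \<epsilon> \<le> total_rate q m"
proof -
  define x where "x i = \<epsilon> * q i m" for i
  have x01: "0 \<le> x i \<and> x i \<le> 1" for i using e e1 q_nonneg by (simp add: x_def)
  have sx: "sum x UNIV = \<epsilon> * total_rate q m" unfolding x_def total_rate_def by (rule sum_distrib_left[symmetric])
  have pb: "1 - sum x UNIV \<le> (\<Prod>i\<in>UNIV. 1 - x i) \<and> (\<Prod>i\<in>UNIV. 1 - x i) \<le> 1 - sum x UNIV + (sum x UNIV)^2"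
    by (rule prod_bound) (use x01 in auto)
  have rho: "P_eps q \<epsilon> m m = (\<Prod>i\<in>UNIV. 1 - x i)" by (simp add: P_eps_diag x_def)
  have u: "1 - P_eps q \<epsilon> m m \<le> \<epsilon> * total_rate q m" using pb rho sx by simp
  have l: "\<epsilon> * (total_rate q m - \<epsilon> * (total_rate q m)^2) \<le> 1 - P_eps q \<epsilon> m m"
    using pb rho sx by (simp add: algebra_simps power2_eq_square)
  show ?thesis using u l e by (simp add: pos_le_divide_eq pos_divide_le_eq mult.commute)
qed

lemma rho_lim:
  fixes q :: "'k::finite \<Rightarrow> ('k \<Rightarrow> bool) \<Rightarrow> real"
  assumes q_nonneg: "\<And>i m. q i m \<ge> 0"
  shows "((\<lambda>\<epsilon>. (1 - P_eps q \<epsilon> m m) / \<epsilon>) \<longlongrightarrow> total_rate q m) (at_right 0)"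
proof -
  obtain e0 where e0: "e0 > 0" and small: "\<And>\<epsilon> i m. 0 < \<epsilon> \<Longrightarrow> \<epsilon> < e0 \<Longrightarrow> \<epsilon> * q i m < 1"
    using eps_setup[of q, OF q_nonneg] by blast
  have ev: "\<forall>\<^sub>F \<epsilon> in at_right 0. total_rate q m - \<epsilon> * (total_rate q m)^2 \<le> (1 - P_eps q \<epsilon> m m) / \<epsilon>
         \<and> (1 - P_eps q \<epsilon> m m) / \<epsilon> \<le> total_rate q m"
  proof (rule eventually_at_rightI[of 0 e0])
    fix \<epsilon> :: real assume "\<epsilon> \<in> {0<..<e0}"
    then have e: "0 < \<epsilon>" "\<epsilon> < e0" by auto
    show "total_rate q m - \<epsilon> * (total_rate q m)^2 \<le> (1 - P_eps q \<epsilon> m m) / \<epsilon>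
         \<and> (1 - P_eps q \<epsilon> m m) / \<epsilon> \<le> total_rate q m"
      by (rule rho_bounds[OF q_nonneg e(1)]) (use small[OF e] in \<open>simp add: less_imp_le\<close>)
  qed (rule e0)
  have l: "((\<lambda>\<epsilon>. total_rate q m - \<epsilon> * (total_rate q m)^2) \<longlongrightarrow> total_rate q m - 0 * (total_rate q m)^2) (at_right 0)"
    by (intro tendsto_intros)
  show ?thesis
    by (rule tendsto_sandwich[OF eventually_mono[OF ev] eventually_mono[OF ev] _ tendsto_const])
       (use l in auto)
qed

lemma div_by_eps: "(e::real) \<noteq> 0 \<Longrightarrow> a / b = (a / e) / (b / e)"
  by (cases "b = 0") (simp_all add: field_simps)

lemma part4:
  fixes q :: "'k::finite \<Rightarrow> ('k \<Rightarrow> bool) \<Rightarrow> real"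
  assumes q_nonneg: "\<And>i m. q i m \<ge> 0" and irred: "ctmc_irreducible (bd_rate q)"
  shows "\<forall>m m'. m \<noteq> m' \<longrightarrow>
        (\<forall>i. m' = flip m i \<longrightarrow>
           ((\<lambda>\<epsilon>. jump_prob q \<epsilon> m m') \<longlongrightarrow> q i m / total_rate q m) (at_right 0))
        \<and> ((\<forall>i. m' \<noteq> flip m i) \<longrightarrow>
           ((\<lambda>\<epsilon>. jump_prob q \<epsilon> m m') \<longlongrightarrow> 0) (at_right 0))"
proof (intro allI impI conjI)
  fix m m' :: "'k \<Rightarrow> bool"
  assume ne: "m \<noteq> m'"
  have lpos: "total_rate q m > 0" by (rule total_rate_pos[OF q_nonneg irred])
  have jp: "\<forall>\<^sub>F \<epsilon> in at_right 0. jump_prob q \<epsilon> m m' = (P_eps q \<epsilon> m m' / \<epsilon>) / ((1 - P_eps q \<epsilon> m m) / \<epsilon>)"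
    by (rule eventually_at_rightI[of 0 1]) (auto simp: jump_prob_def intro!: div_by_eps)
  have rl: "((\<lambda>\<epsilon>. (1 - P_eps q \<epsilon> m m) / \<epsilon>) \<longlongrightarrow> total_rate q m) (at_right 0)"
    by (rule rho_lim[OF q_nonneg])
  {
    fix i assume i: "m' = flip m i"
    have num: "\<forall>\<^sub>F \<epsilon> in at_right 0. P_eps q \<epsilon> m m' / \<epsilon> = q i m * (\<Prod>j\<in>- {i}. 1 - \<epsilon> * q j m)"
      by (rule eventually_at_rightI[of 0 1]) (auto simp: i P_eps_flip)
    have "((\<lambda>\<epsilon>. q i m * (\<Prod>j\<in>- {i}. 1 - \<epsilon> * q j m)) \<longlongrightarrow> q i m * (\<Prod>j\<in>- {i}. 1 - 0 * q j m)) (at_right 0)"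
      by (intro tendsto_intros)
    then have "((\<lambda>\<epsilon>. P_eps q \<epsilon> m m' / \<epsilon>) \<longlongrightarrow> q i m) (at_right 0)"
      using num by (simp add: tendsto_cong)
    then have "((\<lambda>\<epsilon>. (P_eps q \<epsilon> m m' / \<epsilon>) / ((1 - P_eps q \<epsilon> m m) / \<epsilon>)) \<longlongrightarrow> q i m / total_rate q m) (at_right 0)"
      using rl lpos by (intro tendsto_divide) auto
    then show "((\<lambda>\<epsilon>. jump_prob q \<epsilon> m m') \<longlongrightarrow> q i m / total_rate q m) (at_right 0)"
      using jp by (simp add: tendsto_cong)
  }
  {
    assume nf: "\<forall>i. m' \<noteq> flip m i"
    obtain e0 where e0: "e0 > 0" and small: "\<And>\<epsilon> i m. 0 < \<epsilon> \<Longrightarrow> \<epsilon> < e0 \<Longrightarrow> \<epsilon> * q i m < 1"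
      using eps_setup[of q, OF q_nonneg] by blast
    have bnd: "\<forall>\<^sub>F \<epsilon> in at_right 0. 0 \<le> P_eps q \<epsilon> m m' / \<epsilon> \<and> P_eps q \<epsilon> m m' / \<epsilon> \<le> \<epsilon> * (total_rate q m)^2"
    proof (rule eventually_at_rightI[of 0 e0])
      fix \<epsilon> :: real assume "\<epsilon> \<in> {0<..<e0}"
      then have e: "0 < \<epsilon>" "\<epsilon> < e0" by auto
      have x01: "0 \<le> \<epsilon> * q i m \<and> \<epsilon> * q i m \<le> 1" for i
        using small[OF e, of i m] e q_nonneg[of i m] by simp
      obtain a b where ab: "a \<noteq> b" "0 \<le> P_eps q \<epsilon> m m'" "P_eps q \<epsilon> m m' \<le> \<epsilon> * q a m * (\<epsilon> * q b m)"
        using P_eps_two_bound[of \<epsilon> q m m', OF x01 ne] nf by blast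
      have qa: "q a m \<le> total_rate q m" "q b m \<le> total_rate q m"
        unfolding total_rate_def using q_nonneg by (auto intro: member_le_sum)
      have "q a m * q b m \<le> total_rate q m * total_rate q m"
        using qa q_nonneg lpos by (intro mult_mono) auto
      then have "P_eps q \<epsilon> m m' \<le> \<epsilon> * (\<epsilon> * (total_rate q m)^2)"
        using ab(3) e by (smt (verit) mult.assoc mult.left_commute mult_left_mono power2_eq_square)
      then show "0 \<le> P_eps q \<epsilon> m m' / \<epsilon> \<and> P_eps q \<epsilon> m m' / \<epsilon> \<le> \<epsilon> * (total_rate q m)^2"
        using ab(2) e by (simp add: pos_divide_le_eq mult.commute)
    qed (rule e0)
    have z: "((\<lambda>\<epsilon>. \<epsilon> * (total_rate q m)^2) \<longlongrightarrow> 0 * (total_rate q m)^2) (at_right 0)"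
      by (intro tendsto_intros)
    have "((\<lambda>\<epsilon>. P_eps q \<epsilon> m m' / \<epsilon>) \<longlongrightarrow> 0) (at_right 0)"
      by (rule tendsto_sandwich[OF eventually_mono[OF bnd] eventually_mono[OF bnd] tendsto_const])
         (use z in auto)
    then have "((\<lambda>\<epsilon>. (P_eps q \<epsilon> m m' / \<epsilon>) / ((1 - P_eps q \<epsilon> m m) / \<epsilon>)) \<longlongrightarrow> 0 / total_rate q m) (at_right 0)"
      using rl lpos by (intro tendsto_divide) auto
    then show "((\<lambda>\<epsilon>. jump_prob q \<epsilon> m m') \<longlongrightarrow> 0) (at_right 0)"
      using jp by (simp add: tendsto_cong)
  }
qed

lemma geom_sum: "(\<Sum>n<K. (r::real)^n * (1 - r)) = 1 - r^K"
  by (induction K) (simp_all add: algebra_simps)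

lemma rho_pos_lt1:
  fixes q :: "'k::finite \<Rightarrow> ('k \<Rightarrow> bool) \<Rightarrow> real"
  assumes q_nonneg: "\<And>i m. q i m \<ge> 0" and irred: "ctmc_irreducible (bd_rate q)"
    and e: "0 < \<epsilon>" and e1: "\<And>i. \<epsilon> * q i m < 1"
  shows "0 < P_eps q \<epsilon> m m" "P_eps q \<epsilon> m m < 1"
proof -
  show "0 < P_eps q \<epsilon> m m" unfolding P_eps_diag using e1 by (intro prod_pos) (auto simp: less_imp_le)
  have "total_rate q m > 0" by (rule total_rate_pos[OF q_nonneg irred])
  then obtain i0 where i0: "q i0 m > 0"
    unfolding total_rate_def by (metis not_le sum_nonpos)
  have r: "(\<Prod>j\<in>UNIV - {i0}. 1 - \<epsilon> * q j m) \<le> 1"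
    using e1 e q_nonneg by (intro prod_le_1) (auto simp: less_imp_le)
  have r0: "(\<Prod>j\<in>UNIV - {i0}. 1 - \<epsilon> * q j m) \<ge> 0"
    using e1 e q_nonneg by (intro prod_nonneg) (auto simp: less_imp_le)
  have "P_eps q \<epsilon> m m = (1 - \<epsilon> * q i0 m) * (\<Prod>j\<in>UNIV - {i0}. 1 - \<epsilon> * q j m)"
    unfolding P_eps_diag by (rule prod.remove) auto
  also have "\<dots> \<le> 1 - \<epsilon> * q i0 m" using r r0 e1[of i0] by (simp add: mult_left_le)
  also have "\<dots> < 1" using e i0 by simp
  finally show "P_eps q \<epsilon> m m < 1" .
qed

lemma preimage_floor:
  assumes e: "(\<epsilon>::real) > 0"
  shows "(\<lambda>n::nat. \<epsilon> * real (Suc n)) -` {..x} = {..<nat \<lfloor>x / \<epsilon>\<rfloor>}"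
proof (intro set_eqI iffI)
  fix n assume "n \<in> (\<lambda>n::nat. \<epsilon> * real (Suc n)) -` {..x}"
  then have "\<epsilon> * real (Suc n) \<le> x" by simp
  then have "real (Suc n) \<le> x / \<epsilon>" using e by (simp add: pos_le_divide_eq mult.commute)
  then have "Suc n \<le> nat \<lfloor>x / \<epsilon>\<rfloor>" by (rule le_nat_floor)
  then show "n \<in> {..<nat \<lfloor>x / \<epsilon>\<rfloor>}" by simp
next
  fix n assume "n \<in> {..<nat \<lfloor>x / \<epsilon>\<rfloor>}"
  then have n: "Suc n \<le> nat \<lfloor>x / \<epsilon>\<rfloor>" by simp
  then have "\<lfloor>x / \<epsilon>\<rfloor> \<ge> 0" by linarith
  then have "int (Suc n) \<le> \<lfloor>x / \<epsilon>\<rfloor>" using n le_nat_iff by blast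
  then have "of_int (int (Suc n)) \<le> x / \<epsilon>" by (simp only: le_floor_iff)
  then have "real (Suc n) \<le> x / \<epsilon>" by simp
  then have "\<epsilon> * real (Suc n) \<le> x" using e by (simp add: pos_le_divide_eq mult.commute)
  then show "n \<in> (\<lambda>n::nat. \<epsilon> * real (Suc n)) -` {..x}" by simp
qed

lemma cdf_scaled:
  fixes q :: "'k::finite \<Rightarrow> ('k \<Rightarrow> bool) \<Rightarrow> real"
  assumes e: "0 < \<epsilon>" and r: "0 < P_eps q \<epsilon> m m" "P_eps q \<epsilon> m m < 1"
  shows "cdf (scaled_holding_law q \<epsilon> m) x = 1 - (P_eps q \<epsilon> m m) ^ nat \<lfloor>x / \<epsilon>\<rfloor>"
proof -
  define \<rho> where "\<rho> = P_eps q \<epsilon> m m"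
  define G where "G = geometric_pmf (1 - \<rho>)"
  have "cdf (scaled_holding_law q \<epsilon> m) x
      = measure (measure_pmf G) ((\<lambda>n::nat. \<epsilon> * real (Suc n)) -` {..x} \<inter> space (measure_pmf G))"
    unfolding scaled_holding_law_def cdf_def2 G_def \<rho>_def by (rule measure_distr) auto
  also have "\<dots> = measure (measure_pmf G) {..<nat \<lfloor>x / \<epsilon>\<rfloor>}" using preimage_floor[OF e] by simp
  also have "\<dots> = (\<Sum>n<nat \<lfloor>x / \<epsilon>\<rfloor>. pmf G n)" by (rule measure_measure_pmf_finite) simp
  also have "\<dots> = (\<Sum>n<nat \<lfloor>x / \<epsilon>\<rfloor>. \<rho>^n * (1 - \<rho>))"
    using r unfolding G_def \<rho>_def by (intro sum.cong refl) simp
  also have "\<dots> = 1 - \<rho> ^ nat \<lfloor>x / \<epsilon>\<rfloor>" by (rule geom_sum)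
  finally show ?thesis unfolding \<rho>_def .
qed

lemma cdf_exp:
  assumes "l > 0"
  shows "cdf (density lborel (exponential_density l)) x = (if 0 \<le> x then 1 - exp (- l * x) else 0)"
proof -
  have "cdf (density lborel (exponential_density l)) x = enn2real (emeasure (density lborel (erlang_density 0 l)) {..x})"
    by (simp add: cdf_def2 measure_def)
  also have "\<dots> = erlang_CDF 0 l x" using assms by (simp add: emeasure_erlang_density)
  finally show ?thesis by (simp add: erlang_CDF_0)
qed

lemma part3:
  fixes q :: "'k::finite \<Rightarrow> ('k \<Rightarrow> bool) \<Rightarrow> real"
  assumes q_nonneg: "\<And>i m. q i m \<ge> 0" and irred: "ctmc_irreducible (bd_rate q)"
  shows "weak_conv_filter (\<lambda>\<epsilon>. scaled_holding_law q \<epsilon> m)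
          (density lborel (exponential_density (total_rate q m))) (at_right 0)"
  unfolding weak_conv_filter_def
proof (intro allI impI)
  fix x :: real
  define l where "l = total_rate q m"
  have lpos: "l > 0" unfolding l_def by (rule total_rate_pos[OF q_nonneg irred])
  obtain e0 where e0: "e0 > 0" and small: "\<And>\<epsilon> i m. 0 < \<epsilon> \<Longrightarrow> \<epsilon> < e0 \<Longrightarrow> \<epsilon> * q i m < 1"
    using eps_setup[of q, OF q_nonneg] by blast
  define \<rho> where "\<rho> \<epsilon> = P_eps q \<epsilon> m m" for \<epsilon>
  define K where "K \<epsilon> = nat \<lfloor>x / \<epsilon>\<rfloor>" for \<epsilon>
  have rr: "0 < \<rho> \<epsilon>" "\<rho> \<epsilon> < 1" if "0 < \<epsilon>" "\<epsilon> < e0" for \<epsilon>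
    unfolding \<rho>_def using rho_pos_lt1[OF q_nonneg irred that(1) small[OF that]] by auto
  have cdfe: "\<forall>\<^sub>F \<epsilon> in at_right 0. cdf (scaled_holding_law q \<epsilon> m) x = 1 - \<rho> \<epsilon> ^ K \<epsilon>"
  proof (rule eventually_at_rightI[of 0 e0])
    fix \<epsilon> :: real assume "\<epsilon> \<in> {0<..<e0}"
    then have e: "0 < \<epsilon>" "\<epsilon> < e0" by auto
    show "cdf (scaled_holding_law q \<epsilon> m) x = 1 - \<rho> \<epsilon> ^ K \<epsilon>"
      unfolding K_def \<rho>_def by (rule cdf_scaled[OF e(1)]) (use rr[OF e] in \<open>auto simp: \<rho>_def\<close>)
  qed (rule e0)
  have target: "cdf (density lborel (exponential_density l)) x = (if 0 \<le> x then 1 - exp (- l * x) else 0)"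
    by (rule cdf_exp[OF lpos])
  have main: "((\<lambda>\<epsilon>. cdf (scaled_holding_law q \<epsilon> m) x) \<longlongrightarrow> (if 0 \<le> x then 1 - exp (- l * x) else 0)) (at_right 0)"
  proof (cases "x > 0")
    case False
    have "\<forall>\<^sub>F \<epsilon> in at_right 0. cdf (scaled_holding_law q \<epsilon> m) x = 0"
    proof (rule eventually_mono[OF eventually_conj[OF cdfe eventually_at_right_less]])
      fix \<epsilon> :: real assume a: "cdf (scaled_holding_law q \<epsilon> m) x = 1 - \<rho> \<epsilon> ^ K \<epsilon> \<and> 0 < \<epsilon>"
      then have "x / \<epsilon> \<le> 0" using False by (simp add: divide_nonpos_pos)
      then have "K \<epsilon> = 0" unfolding K_def by simp
      then show "cdf (scaled_holding_law q \<epsilon> m) x = 0" using a by simp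
    qed
    then have "((\<lambda>\<epsilon>. cdf (scaled_holding_law q \<epsilon> m) x) \<longlongrightarrow> 0) (at_right 0)"
      by (rule tendsto_eventually)
    moreover have "(if 0 \<le> x then 1 - exp (- l * x) else 0) = 0" using False by auto
    ultimately show ?thesis by simp
  next
    case True
    have A: "((\<lambda>\<epsilon>. (1 - \<rho> \<epsilon>) / \<epsilon>) \<longlongrightarrow> l) (at_right 0)"
      unfolding \<rho>_def l_def by (rule rho_lim[OF q_nonneg])
    have B: "(\<rho> \<longlongrightarrow> 1) (at_right 0)"
    proof -
      have "((\<lambda>\<epsilon>. 1 - \<epsilon> * ((1 - \<rho> \<epsilon>) / \<epsilon>)) \<longlongrightarrow> 1 - 0 * l) (at_right 0)"
        by (intro tendsto_intros A)
      moreover have "\<forall>\<^sub>F \<epsilon> in at_right 0. 1 - \<epsilon> * ((1 - \<rho> \<epsilon>) / \<epsilon>) = \<rho> \<epsilon>"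
        by (rule eventually_mono[OF eventually_at_right_less]) simp
      ultimately have "(\<rho> \<longlongrightarrow> 1 - 0 * l) (at_right 0)" by (rule Lim_transform_eventually)
      then show ?thesis by simp
    qed
    have C: "((\<lambda>\<epsilon>. (\<rho> \<epsilon> - 1) / \<epsilon>) \<longlongrightarrow> - l) (at_right 0)"
    proof -
      have "((\<lambda>\<epsilon>. - ((1 - \<rho> \<epsilon>) / \<epsilon>)) \<longlongrightarrow> - l) (at_right 0)" by (intro tendsto_minus A)
      moreover have "- ((1 - \<rho> \<epsilon>) / \<epsilon>) = (\<rho> \<epsilon> - 1) / \<epsilon>" for \<epsilon> by (metis minus_diff_eq minus_divide_left)
      ultimately show ?thesis by simp
    qed
    have D: "((\<lambda>\<epsilon>. ((\<rho> \<epsilon> - 1) / \<epsilon>) / \<rho> \<epsilon>) \<longlongrightarrow> - l / 1) (at_right 0)"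
      by (rule tendsto_divide[OF C B]) simp
    have E: "((\<lambda>\<epsilon>. ln (\<rho> \<epsilon>) / \<epsilon>) \<longlongrightarrow> - l) (at_right 0)"
    proof (rule tendsto_sandwich[of "\<lambda>\<epsilon>. ((\<rho> \<epsilon> - 1) / \<epsilon>) / \<rho> \<epsilon>" _ _ "\<lambda>\<epsilon>. (\<rho> \<epsilon> - 1) / \<epsilon>"])
      show "\<forall>\<^sub>F \<epsilon> in at_right 0. (\<rho> \<epsilon> - 1) / \<epsilon> / \<rho> \<epsilon> \<le> ln (\<rho> \<epsilon>) / \<epsilon>"
      proof (rule eventually_at_rightI[of 0 e0])
        fix \<epsilon> :: real assume "\<epsilon> \<in> {0<..<e0}"
        then have e: "0 < \<epsilon>" "\<epsilon> < e0" by auto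
        have rp: "0 < \<rho> \<epsilon>" using rr[OF e] by simp
        have "ln (1 / \<rho> \<epsilon>) \<le> 1 / \<rho> \<epsilon> - 1" using rp by (intro ln_le_minus_one) simp
        moreover have "ln (1 / \<rho> \<epsilon>) = - ln (\<rho> \<epsilon>)" using rp by (simp add: ln_div)
        moreover have "1 / \<rho> \<epsilon> - 1 = - ((\<rho> \<epsilon> - 1) / \<rho> \<epsilon>)" using rp by (simp add: field_simps)
        ultimately have "(\<rho> \<epsilon> - 1) / \<rho> \<epsilon> \<le> ln (\<rho> \<epsilon>)" by linarith
        then have "((\<rho> \<epsilon> - 1) / \<rho> \<epsilon>) / \<epsilon> \<le> ln (\<rho> \<epsilon>) / \<epsilon>" using e by (intro divide_right_mono) auto
        moreover have "((\<rho> \<epsilon> - 1) / \<rho> \<epsilon>) / \<epsilon> = ((\<rho> \<epsilon> - 1) / \<epsilon>) / \<rho> \<epsilon>" by simp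
        ultimately show "(\<rho> \<epsilon> - 1) / \<epsilon> / \<rho> \<epsilon> \<le> ln (\<rho> \<epsilon>) / \<epsilon>" by (simp add: mult.commute)
      qed (rule e0)
      show "\<forall>\<^sub>F \<epsilon> in at_right 0. ln (\<rho> \<epsilon>) / \<epsilon> \<le> (\<rho> \<epsilon> - 1) / \<epsilon>"
      proof (rule eventually_at_rightI[of 0 e0])
        fix \<epsilon> :: real assume "\<epsilon> \<in> {0<..<e0}"
        then have e: "0 < \<epsilon>" "\<epsilon> < e0" by auto
        have "ln (\<rho> \<epsilon>) \<le> \<rho> \<epsilon> - 1" using rr[OF e] by (intro ln_le_minus_one) simp
        then show "ln (\<rho> \<epsilon>) / \<epsilon> \<le> (\<rho> \<epsilon> - 1) / \<epsilon>" using e by (intro divide_right_mono) auto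
      qed (rule e0)
      show "((\<lambda>\<epsilon>. (\<rho> \<epsilon> - 1) / \<epsilon> / \<rho> \<epsilon>) \<longlongrightarrow> - l) (at_right 0)" using D by simp
      show "((\<lambda>\<epsilon>. (\<rho> \<epsilon> - 1) / \<epsilon>) \<longlongrightarrow> - l) (at_right 0)" by (rule C)
    qed
    have F: "((\<lambda>\<epsilon>. \<epsilon> * real (K \<epsilon>)) \<longlongrightarrow> x) (at_right 0)"
    proof (rule tendsto_sandwich[of "\<lambda>\<epsilon>. x - \<epsilon>" _ _ "\<lambda>\<epsilon>. x"])
      have bnds: "x - \<epsilon> \<le> \<epsilon> * real (K \<epsilon>) \<and> \<epsilon> * real (K \<epsilon>) \<le> x" if e: "0 < \<epsilon>" for \<epsilon>
      proof -
        have pos: "x / \<epsilon> > 0" using e True by simp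
        then have fl: "\<lfloor>x / \<epsilon>\<rfloor> \<ge> 0" by simp
        then have rK: "real (K \<epsilon>) = of_int \<lfloor>x / \<epsilon>\<rfloor>" unfolding K_def by simp
        have f1: "of_int \<lfloor>x / \<epsilon>\<rfloor> \<le> x / \<epsilon>" by simp
        have f2: "x / \<epsilon> - 1 < of_int \<lfloor>x / \<epsilon>\<rfloor>" by simp
        have "\<epsilon> * of_int \<lfloor>x / \<epsilon>\<rfloor> \<le> \<epsilon> * (x / \<epsilon>)" using f1 e by (intro mult_left_mono) auto
        moreover have "\<epsilon> * (x / \<epsilon> - 1) \<le> \<epsilon> * of_int \<lfloor>x / \<epsilon>\<rfloor>" using f2 e by (intro mult_left_mono) auto
        moreover have "\<epsilon> * (x / \<epsilon>) = x" "\<epsilon> * (x / \<epsilon> - 1) = x - \<epsilon>" using e by (simp_all add: field_simps)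
        ultimately show ?thesis unfolding rK by simp
      qed
      show "\<forall>\<^sub>F \<epsilon> in at_right 0. x - \<epsilon> \<le> \<epsilon> * real (K \<epsilon>)"
        by (rule eventually_mono[OF eventually_at_right_less]) (use bnds in blast)
      show "\<forall>\<^sub>F \<epsilon> in at_right 0. \<epsilon> * real (K \<epsilon>) \<le> x"
        by (rule eventually_mono[OF eventually_at_right_less]) (use bnds in blast)
      have "((\<lambda>\<epsilon>. x - \<epsilon>) \<longlongrightarrow> x - 0) (at_right 0)" by (intro tendsto_intros)
      then show "((\<lambda>\<epsilon>. x - \<epsilon>) \<longlongrightarrow> x) (at_right 0)" by simp
      show "((\<lambda>\<epsilon>. x) \<longlongrightarrow> x) (at_right 0)" by simp
    qed
    have G: "((\<lambda>\<epsilon>. \<rho> \<epsilon> ^ K \<epsilon>) \<longlongrightarrow> exp (x * - l)) (at_right 0)"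
    proof -
      have "((\<lambda>\<epsilon>. exp ((\<epsilon> * real (K \<epsilon>)) * (ln (\<rho> \<epsilon>) / \<epsilon>))) \<longlongrightarrow> exp (x * - l)) (at_right 0)"
        by (intro tendsto_exp tendsto_mult F E)
      moreover have "\<forall>\<^sub>F \<epsilon> in at_right 0. exp ((\<epsilon> * real (K \<epsilon>)) * (ln (\<rho> \<epsilon>) / \<epsilon>)) = \<rho> \<epsilon> ^ K \<epsilon>"
      proof (rule eventually_at_rightI[of 0 e0])
        fix \<epsilon> :: real assume "\<epsilon> \<in> {0<..<e0}"
        then have e: "0 < \<epsilon>" "\<epsilon> < e0" by auto
        have "(\<epsilon> * real (K \<epsilon>)) * (ln (\<rho> \<epsilon>) / \<epsilon>) = real (K \<epsilon>) * ln (\<rho> \<epsilon>)" using e by simp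
        then have "exp ((\<epsilon> * real (K \<epsilon>)) * (ln (\<rho> \<epsilon>) / \<epsilon>)) = exp (ln (\<rho> \<epsilon>)) ^ K \<epsilon>"
          by (simp add: exp_of_nat_mult)
        also have "\<dots> = \<rho> \<epsilon> ^ K \<epsilon>" using rr[OF e] by simp
        finally show "exp ((\<epsilon> * real (K \<epsilon>)) * (ln (\<rho> \<epsilon>) / \<epsilon>)) = \<rho> \<epsilon> ^ K \<epsilon>" .
      qed (rule e0)
      ultimately show ?thesis by (rule Lim_transform_eventually)
    qed
    have "((\<lambda>\<epsilon>. 1 - \<rho> \<epsilon> ^ K \<epsilon>) \<longlongrightarrow> 1 - exp (x * - l)) (at_right 0)"
      by (intro tendsto_diff tendsto_const G)
    then have "((\<lambda>\<epsilon>. cdf (scaled_holding_law q \<epsilon> m) x) \<longlongrightarrow> 1 - exp (x * - l)) (at_right 0)"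
      using cdfe by (rule Lim_transform_eventually[OF _ eventually_mono]) simp
    moreover have "(if 0 \<le> x then 1 - exp (- l * x) else 0) = 1 - exp (x * - l)" using True by (simp add: mult.commute)
    ultimately show ?thesis by simp
  qed
  then show "((\<lambda>\<epsilon>. cdf (scaled_holding_law q \<epsilon> m) x) \<longlongrightarrow> cdf (density lborel (exponential_density (total_rate q m))) x) (at_right 0)"
    using target unfolding l_def by simp
qed

theorem theorem3p1:
  fixes q :: "'k::finite \<Rightarrow> ('k \<Rightarrow> bool) \<Rightarrow> real"
    and \<pi> :: "('k \<Rightarrow> bool) \<Rightarrow> real"
  assumes q_nonneg: "\<And>i m. q i m \<ge> 0"
    and irred: "ctmc_irreducible (bd_rate q)"
    and pi_pos: "\<And>m. \<pi> m > 0"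
    and pi_sum: "(\<Sum>m\<in>UNIV. \<pi> m) = 1"
    and rev: "reversible (bd_rate q) \<pi>"
  shows
    "(\<forall>\<epsilon>>0. (\<forall>i m. \<epsilon> * q i m < 1) \<longrightarrow>
        dtmc_irreducible (P_eps q \<epsilon>) \<and> dtmc_aperiodic (P_eps q \<epsilon>)
        \<and> (\<exists>!p. stationary (P_eps q \<epsilon>) p)
        \<and> limiting (P_eps q \<epsilon>) (stat_dist (P_eps q \<epsilon>)))
   \<and> (\<forall>N. is_vnorm N \<longrightarrow>
        (\<lambda>\<epsilon>. N (\<lambda>m. stat_dist (P_eps q \<epsilon>) m - \<pi> m)) \<in> O[at_right 0](\<lambda>\<epsilon>. \<epsilon>))
   \<and> (\<forall>m. weak_conv_filter (\<lambda>\<epsilon>. scaled_holding_law q \<epsilon> m)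
          (density lborel (exponential_density (total_rate q m))) (at_right 0))
   \<and> (\<forall>m m'. m \<noteq> m' \<longrightarrow>
        (\<forall>i. m' = flip m i \<longrightarrow>
           ((\<lambda>\<epsilon>. jump_prob q \<epsilon> m m') \<longlongrightarrow> q i m / total_rate q m) (at_right 0))
        \<and> ((\<forall>i. m' \<noteq> flip m i) \<longrightarrow>
           ((\<lambda>\<epsilon>. jump_prob q \<epsilon> m m') \<longlongrightarrow> 0) (at_right 0)))"
proof -
  have i: "\<forall>\<epsilon>>0. (\<forall>i m. \<epsilon> * q i m < 1) \<longrightarrow>
        dtmc_irreducible (P_eps q \<epsilon>) \<and> dtmc_aperiodic (P_eps q \<epsilon>)
        \<and> (\<exists>!p. stationary (P_eps q \<epsilon>) p)
        \<and> limiting (P_eps q \<epsilon>) (stat_dist (P_eps q \<epsilon>))"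
  proof (intro allI impI)
    fix \<epsilon> :: real assume e: "\<epsilon> > 0" and s: "\<forall>i m. \<epsilon> * q i m < 1"
    have "dtmc_irreducible (P_eps q \<epsilon>) \<and> dtmc_aperiodic (P_eps q \<epsilon>)
        \<and> (\<exists>!p. stationary (P_eps q \<epsilon>) p)
        \<and> limiting (P_eps q \<epsilon>) (stat_dist (P_eps q \<epsilon>))
        \<and> stationary (P_eps q \<epsilon>) (stat_dist (P_eps q \<epsilon>))"
      by (rule part1[OF q_nonneg irred e]) (use s in blast)
    then show "dtmc_irreducible (P_eps q \<epsilon>) \<and> dtmc_aperiodic (P_eps q \<epsilon>)
        \<and> (\<exists>!p. stationary (P_eps q \<epsilon>) p)
        \<and> limiting (P_eps q \<epsilon>) (stat_dist (P_eps q \<epsilon>))" by (elim conjE) (intro conjI)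
  qed
  have ii: "\<forall>N. is_vnorm N \<longrightarrow>
        (\<lambda>\<epsilon>. N (\<lambda>m. stat_dist (P_eps q \<epsilon>) m - \<pi> m)) \<in> O[at_right 0](\<lambda>\<epsilon>. \<epsilon>)"
    using part2[OF q_nonneg irred pi_pos pi_sum rev] by blast
  have iii: "\<forall>m. weak_conv_filter (\<lambda>\<epsilon>. scaled_holding_law q \<epsilon> m)
          (density lborel (exponential_density (total_rate q m))) (at_right 0)"
    using part3[OF q_nonneg irred] by blast
  have iv: "\<forall>m m'. m \<noteq> m' \<longrightarrow>
        (\<forall>i. m' = flip m i \<longrightarrow>
           ((\<lambda>\<epsilon>. jump_prob q \<epsilon> m m') \<longlongrightarrow> q i m / total_rate q m) (at_right 0))
        \<and> ((\<forall>i. m' \<noteq> flip m i) \<longrightarrow>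
           ((\<lambda>\<epsilon>. jump_prob q \<epsilon> m m') \<longlongrightarrow> 0) (at_right 0))"
    by (rule part4[OF q_nonneg irred])
  show ?thesis by (rule conjI[OF i conjI[OF ii conjI[OF iii iv]]])
qed

end
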